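(* Let $K$ be a field of characteristic $0$ and let $f=\sum a_{i,j}x_1^ix_2^j\in K[[x_1,x_2]]$ be D-finite over $K(x_1,x_2)$. Fix non-zero $L_1\in K[x_1,x_2]\langle D_{x_1}\rangle$, $L_2\in K[x_1,x_2]\langle D_{x_2}\rangle$ annihilating $f$, let $r_f$ be the maximum of their orders and $d_f$ the maximum of their degrees. Then $\Delta_{1,2}(f)=\sum_{i\ge0}a_{i,i}x_1^i$ is D-finite over $K(x_1)$, and there exists a non-zero operator $\bar P\in K[x_1]\langle D_{x_1}\rangle$ with $\bar P(\Delta_{1,2}(f))=0$, $\deg(\bar P)=O(d_f^3r_f^4)$ and $\operatorname{ord}(\bar P)=O(d_f^2r_f^2)$.
   Context: A series is D-finite over the field of rational functions in its variables if the space spanned over that field by all its partial derivatives is finite-dimensional. For $L=\sum_{j=0}^r\ell_jD_{y}^j$ with polynomial coefficients and $\ell_r\ne0$, order is $r$ and degree is the maximal total degree of the $\ell_j$. The $O(\cdot)$ bounds are as functions of $d_f$ and $r_f$. *)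

theory Defs
  imports "HOL-Computational_Algebra.Computational_Algebra"
begin

text \<open>Bivariate power series in K[[x1,x2]] are represented as 'a fps fps: for f, the
 coefficient a_{i,j} of x1^i x2^j is f $ i $ j (outer variable x1, inner x2).
 Bivariate polynomials in K[x1,x2] are 'a poly poly: the coefficient of x1^i x2^j
 of p is coeff (coeff p i) j.\<close>

definition poly2_to_fps2 :: "'a::field poly poly \<Rightarrow> 'a fps fps" where
  "poly2_to_fps2 p = Abs_fps (\<lambda>i. fps_of_poly (coeff p i))"

definition tdeg2 :: "'a::zero poly poly \<Rightarrow> nat" where
  "tdeg2 p = Max (insert 0 {i + j | i j. coeff (coeff p i) j \<noteq> 0})"

definition D1 :: "'a::field fps fps \<Rightarrow> 'a fps fps" where
  "D1 f = fps_deriv f"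

definition D2 :: "'a::field fps fps \<Rightarrow> 'a fps fps" where
  "D2 f = Abs_fps (\<lambda>i. fps_deriv (f $ i))"

definition pderiv2 :: "nat \<Rightarrow> nat \<Rightarrow> 'a::field fps fps \<Rightarrow> 'a fps fps" where
  "pderiv2 a b f = (D1 ^^ a) ((D2 ^^ b) f)"

text \<open>K(x1,x2), embedded in the fraction field of K[[x1,x2]]\<close>
definition ratfun2 :: "'a::field fps fps fract set" where
  "ratfun2 = {Fract (poly2_to_fps2 p) (poly2_to_fps2 q) | p q. q \<noteq> 0}"

text \<open>D-finite over K(x1,x2): the K(x1,x2)-span of all partial derivatives is
 finite-dimensional, i.e. spanned by finitely many of them.\<close>
definition dfinite2 :: "'a::field fps fps \<Rightarrow> bool" where
  "dfinite2 f \<longleftrightarrow> (\<exists>n. \<forall>a b. \<exists>c. (\<forall>i j. c i j \<in> ratfun2) \<and>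
      Fract (pderiv2 a b f) 1 = (\<Sum>i<n. \<Sum>j<n. c i j * Fract (pderiv2 i j f) 1))"

text \<open>K(x1), embedded in the fraction field of K[[x1]]\<close>
definition ratfun1 :: "'a::field fps fract set" where
  "ratfun1 = {Fract (fps_of_poly p) (fps_of_poly q) | p q. q \<noteq> 0}"

definition dfinite1 :: "'a::field fps \<Rightarrow> bool" where
  "dfinite1 g \<longleftrightarrow> (\<exists>n. \<forall>k. \<exists>c. (\<forall>i. c i \<in> ratfun1) \<and>
      Fract ((fps_deriv ^^ k) g) 1 = (\<Sum>i<n. c i * Fract ((fps_deriv ^^ i) g) 1))"

text \<open>Operators L = sum_j l_j D^j are lists [l_0, ..., l_r]; nonzero means
 the list is nonempty with l_r \<noteq> 0; order r = length - 1.\<close>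
definition op_nonzero :: "'b::zero list \<Rightarrow> bool" where
  "op_nonzero L \<longleftrightarrow> L \<noteq> [] \<and> last L \<noteq> 0"

definition op_ord :: "'b list \<Rightarrow> nat" where
  "op_ord L = length L - 1"

definition op_deg2 :: "'a::zero poly poly list \<Rightarrow> nat" where
  "op_deg2 L = Max (insert 0 (tdeg2 ` set L))"

definition op_deg1 :: "'a::zero poly list \<Rightarrow> nat" where
  "op_deg1 L = Max (insert 0 (degree ` set L))"

definition apply_op_x1 :: "'a::field poly poly list \<Rightarrow> 'a fps fps \<Rightarrow> 'a fps fps" where
  "apply_op_x1 L f = (\<Sum>j<length L. poly2_to_fps2 (L ! j) * (D1 ^^ j) f)"

definition apply_op_x2 :: "'a::field poly poly list \<Rightarrow> 'a fps fps \<Rightarrow> 'a fps fps" where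
  "apply_op_x2 L f = (\<Sum>j<length L. poly2_to_fps2 (L ! j) * (D2 ^^ j) f)"

definition apply_op1 :: "'a::field poly list \<Rightarrow> 'a fps \<Rightarrow> 'a fps" where
  "apply_op1 P g = (\<Sum>j<length P. fps_of_poly (P ! j) * (fps_deriv ^^ j) g)"

definition diag12 :: "'a fps fps \<Rightarrow> 'a fps" where
  "diag12 f = Abs_fps (\<lambda>i. f $ i $ i)"

definition hyp :: "'a::field fps fps \<Rightarrow> 'a poly poly list \<Rightarrow> 'a poly poly list \<Rightarrow> bool" where
  "hyp f L1 L2 \<longleftrightarrow> dfinite2 f \<and> op_nonzero L1 \<and> op_nonzero L2 \<and>
     apply_op_x1 L1 f = 0 \<and> apply_op_x2 L2 f = 0"

end

theory Submission
  imports Defs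
begin

definition sc :: "'a::field \<Rightarrow> 'a fps fps \<Rightarrow> 'a fps fps" where
  "sc c h = fps_const (fps_const c) * h"

interpretation vs: vector_space "sc :: 'a::field \<Rightarrow> 'a fps fps \<Rightarrow> 'a fps fps"
  by unfold_locales (auto simp: sc_def algebra_simps fps_const_add[symmetric] fps_const_mult[symmetric] simp del: fps_const_add fps_const_mult)

lemma sc_nth[simp]: "sc c h $ p $ q = c * h $ p $ q"
  by (simp add: sc_def)

definition pdeg_le :: "'a::zero fps fps \<Rightarrow> nat \<Rightarrow> bool" where
  "pdeg_le m e \<longleftrightarrow> (\<forall>u v. m $ u $ v \<noteq> 0 \<longrightarrow> u + v \<le> e)"

definition YY :: "'a::comm_ring_1 fps fps" where "YY = fps_const fps_X"

lemma pdeg_le_0[simp]: "pdeg_le 0 e" by (simp add: pdeg_le_def)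
lemma pdeg_le_1[simp]: "pdeg_le (1::'a::comm_ring_1 fps fps) e"
  by (auto simp: pdeg_le_def fps_one_nth split: if_splits)
lemma pdeg_le_mono: "pdeg_le m e \<Longrightarrow> e \<le> e' \<Longrightarrow> pdeg_le m e'"
  by (force simp: pdeg_le_def)
lemma pdeg_le_add: "pdeg_le (m::'a::monoid_add fps fps) e \<Longrightarrow> pdeg_le n e \<Longrightarrow> pdeg_le (m + n) e"
  unfolding pdeg_le_def by (metis add.left_neutral fps_add_nth)
lemma pdeg_le_uminus: "pdeg_le (m::'a::ab_group_add fps fps) e \<Longrightarrow> pdeg_le (- m) e"
  by (force simp: pdeg_le_def)
lemma pdeg_le_diff: "pdeg_le (m::'a::ab_group_add fps fps) e \<Longrightarrow> pdeg_le n e \<Longrightarrow> pdeg_le (m - n) e"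
  by (force simp: pdeg_le_def)
lemma pdeg_le_sc: "pdeg_le m e \<Longrightarrow> pdeg_le (sc c m) e"
  by (force simp: pdeg_le_def)
lemma pdeg_le_sum: "(\<And>i. i \<in> A \<Longrightarrow> pdeg_le (m i) e) \<Longrightarrow> pdeg_le (sum m A) e"
proof (induction A rule: infinite_finite_induct)
  case (insert x F) then show ?case by (auto intro: pdeg_le_add)
qed auto

lemma pdeg_le_mult:
  fixes m n :: "'a::comm_ring_1 fps fps"
  assumes "pdeg_le m e1" "pdeg_le n e2" shows "pdeg_le (m * n) (e1 + e2)"
  unfolding pdeg_le_def
proof (intro allI impI)
  fix u v assume "(m * n) $ u $ v \<noteq> 0"
  then have "(\<Sum>i=0..u. (m $ i * n $ (u - i)) $ v) \<noteq> 0" by (simp add: fps_mult_nth fps_sum_nth)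
  then obtain i where i: "i \<le> u" "(m $ i * n $ (u - i)) $ v \<noteq> 0" by (metis (no_types, lifting) atLeastAtMost_iff sum.neutral)
  then have "(\<Sum>j=0..v. m $ i $ j * n $ (u - i) $ (v - j)) \<noteq> 0" by (simp add: fps_mult_nth)
  then obtain j where j: "j \<le> v" "m $ i $ j * n $ (u - i) $ (v - j) \<noteq> 0" by (metis (no_types, lifting) atLeastAtMost_iff sum.neutral)
  then have "m $ i $ j \<noteq> 0" "n $ (u - i) $ (v - j) \<noteq> 0" by auto
  then have "i + j \<le> e1" "(u - i) + (v - j) \<le> e2" using assms unfolding pdeg_le_def by blast+
  then show "u + v \<le> e1 + e2" using i j by linarith
qed

lemma pdeg_le_power: "pdeg_le (m::'a::comm_ring_1 fps fps) e \<Longrightarrow> pdeg_le (m ^ n) (n * e)"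
  by (induction n) (auto intro: pdeg_le_mult)

lemma pdeg_le_X: "pdeg_le (fps_X :: 'a::comm_ring_1 fps fps) 1"
  by (auto simp: pdeg_le_def fps_X_def fps_one_nth split: if_splits)

lemma pdeg_le_YY: "pdeg_le (YY :: 'a::comm_ring_1 fps fps) 1"
  by (auto simp: pdeg_le_def YY_def fps_X_def split: if_splits)

lemma of_nat_fps2: "(of_nat k :: 'a::comm_ring_1 fps fps) = fps_const (fps_const (of_nat k))"
  by (simp add: fps_of_nat)

lemma of_nat_mult_nth2[simp]: "(of_nat k * (h :: 'a::comm_ring_1 fps fps)) $ p $ q = of_nat k * h $ p $ q"
  by (simp add: of_nat_fps2)

lemma of_nat_eq_sc: "(of_nat k * (h :: 'a::field fps fps)) = sc (of_nat k) h"
  by (simp add: of_nat_fps2 sc_def)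

lemma pdeg_le_of_nat_mult: "pdeg_le m e \<Longrightarrow> pdeg_le (of_nat k * (m :: 'a::field fps fps)) e"
  by (simp add: of_nat_eq_sc pdeg_le_sc)


definition deriv_op :: "('a::field fps fps \<Rightarrow> 'a fps fps) \<Rightarrow> bool" where
  "deriv_op D \<longleftrightarrow> (\<forall>a b. D (a + b) = D a + D b) \<and> (\<forall>a b. D (a * b) = D a * b + a * D b) \<and>
     (\<forall>c h. D (sc c h) = sc c (D h)) \<and> (\<forall>m e. pdeg_le m e \<longrightarrow> pdeg_le (D m) e)"

context
  fixes D :: "'a::field fps fps \<Rightarrow> 'a fps fps"
  assumes D: "deriv_op D"
begin

lemma dadd: "D (a + b) = D a + D b" using D by (simp add: deriv_op_def)
lemma dmult: "D (a * b) = D a * b + a * D b" using D by (simp add: deriv_op_def)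
lemma dsc: "D (sc c h) = sc c (D h)" using D by (simp add: deriv_op_def)
lemma dpdeg: "pdeg_le m e \<Longrightarrow> pdeg_le (D m) e" using D by (simp add: deriv_op_def)
lemma dzero: "D 0 = 0" using dadd[of 0 0] by (metis add.right_neutral add_left_cancel)
lemma dneg: "D (- a) = - D a" using dadd[of a "-a"] dzero by (simp add: add_eq_0_iff)
lemma ddiff: "D (a - b) = D a - D b" using dadd[of a "-b"] dneg by simp
lemma dsum: "D (sum g A) = (\<Sum>i\<in>A. D (g i))"
  by (induction A rule: infinite_finite_induct) (auto simp: dzero dadd)
lemma d_one: "D 1 = 0" using dmult[of 1 1] by (metis add.right_neutral add_left_cancel mult_1_left mult_1_right)
lemma dofnat: "D (of_nat k * a) = of_nat k * D a" by (simp add: of_nat_eq_sc dsc)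

lemma dit_add: "(D ^^ n) (a + b) = (D ^^ n) a + (D ^^ n) b"
  by (induction n) (auto simp: dadd)
lemma dit_zero: "(D ^^ n) 0 = 0"
  by (induction n) (auto simp: dzero)
lemma dit_sc: "(D ^^ n) (sc c a) = sc c ((D ^^ n) a)"
  by (induction n) (auto simp: dsc)
lemma dit_neg: "(D ^^ n) (- a) = - (D ^^ n) a"
  by (induction n) (auto simp: dneg)
lemma dit_diff: "(D ^^ n) (a - b) = (D ^^ n) a - (D ^^ n) b"
  by (induction n) (auto simp: ddiff)
lemma dit_sum: "(D ^^ n) (sum g A) = (\<Sum>i\<in>A. (D ^^ n) (g i))"
  by (induction n) (auto simp: dsum)
lemma dit_ofnat: "(D ^^ n) (of_nat k * a) = of_nat k * (D ^^ n) a"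
  by (induction n) (auto simp: dofnat)
lemma dit_pdeg: "pdeg_le m e \<Longrightarrow> pdeg_le ((D ^^ n) m) e"
  by (induction n) (auto simp: dpdeg)

lemma dpow: "l * D (l ^ b) = of_nat b * D l * l ^ b"
proof (induction b)
  case 0 then show ?case by (simp add: d_one)
next
  case (Suc b)
  have "l * D (l ^ Suc b) = l * (D l * l ^ b + l * D (l ^ b))" by (simp add: dmult)
  also have "\<dots> = D l * l ^ Suc b + l * (l * D (l ^ b))" by (simp add: algebra_simps)
  also have "\<dots> = of_nat (Suc b) * D l * l ^ Suc b" by (simp only: mult.assoc[symmetric] Suc.IH) (simp add: algebra_simps)
  finally show ?case .
qed

lemma leibniz: "(D ^^ n) (a * b) = (\<Sum>s\<le>n. of_nat (n choose s) * ((D ^^ s) a * (D ^^ (n - s)) b))"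
proof (induction n)
  case 0 then show ?case by simp
next
  case (Suc n)
  let ?T = "\<lambda>s. (D ^^ s) a * (D ^^ (Suc n - s)) b"
  have "(D ^^ Suc n) (a * b) = (\<Sum>s\<le>n. of_nat (n choose s) * D ((D ^^ s) a * (D ^^ (n - s)) b))"
    by (simp add: Suc dsum dofnat)
  also have "\<dots> = (\<Sum>s\<le>n. of_nat (n choose s) * ?T (Suc s) + of_nat (n choose s) * ?T s)"
  proof (rule sum.cong[OF refl])
    fix s assume "s \<in> {..n}"
    then have "D ((D ^^ (n - s)) b) = (D ^^ (Suc n - s)) b" by (simp add: Suc_diff_le)
    then show "of_nat (n choose s) * D ((D ^^ s) a * (D ^^ (n - s)) b) = of_nat (n choose s) * ?T (Suc s) + of_nat (n choose s) * ?T s"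
      by (simp add: dmult distrib_left)
  qed
  also have "\<dots> = (\<Sum>s\<le>n. of_nat (n choose s) * ?T (Suc s)) + (\<Sum>s\<le>n. of_nat (n choose s) * ?T s)"
    by (rule sum.distrib)
  also have "(\<Sum>s\<le>n. of_nat (n choose s) * ?T s) = (\<Sum>s\<le>Suc n. of_nat (n choose s) * ?T s)"
    by (simp add: binomial_eq_0)
  also have "(\<Sum>s\<le>Suc n. of_nat (n choose s) * ?T s) = of_nat (n choose 0) * ?T 0 + (\<Sum>s\<le>n. of_nat (n choose Suc s) * ?T (Suc s))"
    by (rule sum.atMost_Suc_shift)
  also have "(\<Sum>s\<le>n. of_nat (n choose s) * ?T (Suc s)) + (of_nat (n choose 0) * ?T 0 + (\<Sum>s\<le>n. of_nat (n choose Suc s) * ?T (Suc s)))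
     = of_nat (Suc n choose 0) * ?T 0 + (\<Sum>s\<le>n. of_nat (Suc n choose Suc s) * ?T (Suc s))"
  proof -
    have "(\<Sum>s\<le>n. of_nat (Suc n choose Suc s) * ?T (Suc s)) = (\<Sum>s\<le>n. of_nat (n choose s) * ?T (Suc s)) + (\<Sum>s\<le>n. of_nat (n choose Suc s) * ?T (Suc s))"
      by (simp only: binomial_Suc_Suc of_nat_add distrib_right sum.distrib)
    moreover have "(Suc n choose 0) = (n choose 0)" by simp
    ultimately show ?thesis by (simp only: add.assoc add.left_commute)
  qed
  also have "\<dots> = (\<Sum>s\<le>Suc n. of_nat (Suc n choose s) * ?T s)"
    by (rule sum.atMost_Suc_shift[symmetric])
  finally show ?case by simp
qed

end

lemma dit_commute:
  assumes "\<And>x. D (E x) = E (D x)"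
  shows "(D ^^ n) ((E ^^ m) x) = (E ^^ m) ((D ^^ n) x)"
proof -
  have 1: "D ((E ^^ m) x) = (E ^^ m) (D x)" for x by (induction m) (auto simp: assms)
  show ?thesis by (induction n) (auto simp: 1)
qed

lemma deriv_op_D1: "deriv_op (D1 :: 'a::field fps fps \<Rightarrow> _)"
  unfolding deriv_op_def D1_def
proof (intro conjI allI impI)
  fix c :: 'a and h :: "'a fps fps" show "fps_deriv (sc c h) = sc c (fps_deriv h)"
    by (simp add: sc_def)
next
  fix m :: "'a fps fps" and e assume "pdeg_le m e"
  then show "pdeg_le (fps_deriv m) e"
    unfolding pdeg_le_def
  proof (intro allI impI)
    fix u v assume "fps_deriv m $ u $ v \<noteq> 0"
    then have "m $ (u+1) $ v \<noteq> 0" by (simp add: fps_of_nat[symmetric])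
    then show "u + v \<le> e" using \<open>pdeg_le m e\<close> unfolding pdeg_le_def by fastforce
  qed
qed (auto simp: fps_deriv_mult)

lemma D2_nth[simp]: "D2 f $ i = fps_deriv (f $ i)" by (simp add: D2_def)

lemma deriv_op_D2: "deriv_op (D2 :: 'a::field fps fps \<Rightarrow> _)"
  unfolding deriv_op_def
proof (intro conjI allI impI)
  fix a b :: "'a fps fps" show "D2 (a + b) = D2 a + D2 b" by (rule fps_ext) simp
next
  fix a b :: "'a fps fps" show "D2 (a * b) = D2 a * b + a * D2 b"
    by (rule fps_ext) (simp add: fps_mult_nth fps_deriv_sum fps_deriv_mult sum.distrib)
next
  fix c :: 'a and h :: "'a fps fps" show "D2 (sc c h) = sc c (D2 h)"
    by (rule fps_ext) (simp add: sc_def)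
next
  fix m :: "'a fps fps" and e assume "pdeg_le m e"
  then show "pdeg_le (D2 m) e"
    unfolding pdeg_le_def proof (intro allI impI)
    fix u v assume "D2 m $ u $ v \<noteq> 0"
    then have "m $ u $ (v+1) \<noteq> 0" by simp
    then show "u + v \<le> e" using \<open>pdeg_le m e\<close> unfolding pdeg_le_def by fastforce
  qed
qed

lemma D1_D2_commute: "D1 (D2 x) = D2 (D1 (x :: 'a::field fps fps))"
  by (rule fps_ext) (simp add: D1_def fps_of_nat[symmetric])


lemma sc_add_mult: "q * (sc c y + z) = sc c (q * y) + q * (z :: 'a::field fps fps)"
  by (simp add: sc_def algebra_simps)

lemma span_map:
  assumes "x \<in> vs.span S" "\<And>y. y \<in> S \<Longrightarrow> \<phi> y \<in> vs.span T" "\<phi> 0 = 0"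
    "\<And>c y z. \<phi> (sc c y + z) = sc c (\<phi> y) + \<phi> z"
  shows "\<phi> x \<in> vs.span T"
  using assms(1)
proof (induction rule: vs.span_induct_alt)
  case base then show ?case using assms(3) by (simp add: vs.span_zero)
next
  case (step c x y) then show ?case using assms(2,4) by (simp add: vs.span_add vs.span_scale)
qed

lemma span_mult:
  assumes "x \<in> vs.span S" "\<And>y. y \<in> S \<Longrightarrow> q * y \<in> vs.span T"
  shows "q * x \<in> vs.span T"
  by (rule span_map[OF assms]) (auto simp: sc_add_mult)

definition KG :: "('a::field fps fps \<Rightarrow> 'a fps fps) \<Rightarrow> ('a fps fps \<Rightarrow> 'a fps fps) \<Rightarrow> 'a fps fps \<Rightarrow> nat \<Rightarrow> nat \<Rightarrow> 'a fps fps \<Rightarrow> nat \<Rightarrow> 'a fps fps set" where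
  "KG DA DB l r d f b = {c * l ^ b' * (DA ^^ \<alpha>) ((DB ^^ b') f) | c b' \<alpha>. b' \<le> b \<and> \<alpha> < r \<and> pdeg_le c ((b - b' + 1) * d)}"

lemma KG_mult:
  assumes "x \<in> vs.span (KG DA DB l r d f b0)" "b0 \<le> b" "pdeg_le q ((b - b0) * d)"
  shows "q * x \<in> vs.span (KG DA DB l r d f b)"
proof (rule span_mult[OF assms(1)])
  fix y assume "y \<in> KG DA DB l r d f b0"
  then obtain c b' \<alpha> where y: "y = c * l ^ b' * (DA ^^ \<alpha>) ((DB ^^ b') f)" "b' \<le> b0" "\<alpha> < r"
     "pdeg_le c ((b0 - b' + 1) * d)" unfolding KG_def by blast
  have "pdeg_le (q * c) ((b - b0) * d + (b0 - b' + 1) * d)" by (rule pdeg_le_mult[OF assms(3) y(4)])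
  moreover have "(b - b0) * d + (b0 - b' + 1) * d = (b - b' + 1) * d"
    using y(2) assms(2) by (simp add: add_mult_distrib[symmetric])
  ultimately have pd: "pdeg_le (q * c) ((b - b' + 1) * d)"
    by (simp add: algebra_simps)
  have "q * c * l ^ b' * (DA ^^ \<alpha>) ((DB ^^ b') f) \<in> KG DA DB l r d f b"
    unfolding KG_def using y(2,3) assms(2) pd by fastforce
  then show "q * y \<in> vs.span (KG DA DB l r d f b)" by (simp add: y(1) vs.span_base mult.assoc)
qed

lemma Kred:
  fixes DA DB :: "'a::field fps fps \<Rightarrow> 'a fps fps" and P :: "nat \<Rightarrow> 'a fps fps"
  assumes dA: "deriv_op DA" and dB: "deriv_op DB" and comm: "\<And>x. DA (DB x) = DB (DA x)"
    and degP: "\<And>j. j \<le> r \<Longrightarrow> pdeg_le (P j) d"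
    and ann: "(\<Sum>j\<le>r. P j * (DA ^^ j) f) = 0"
  shows "P r ^ (b + 1) * (DA ^^ r) ((DB ^^ b) f) \<in> vs.span (KG DA DB (P r) r d f b)"
proof (induction b rule: less_induct)
  case (less b)
  define l where "l = P r"
  define T where "T j s = of_nat (b choose s) * ((DB ^^ s) (P j) * (DA ^^ j) ((DB ^^ (b - s)) f))" for j s
  have "0 = (DB ^^ b) (\<Sum>j\<le>r. P j * (DA ^^ j) f)" using ann by (simp add: dit_zero[OF dB])
  also have "\<dots> = (\<Sum>j\<le>r. \<Sum>s\<le>b. T j s)"
    by (simp add: dit_sum[OF dB] leibniz[OF dB] T_def dit_commute[of DB DA, OF comm[symmetric]])
  also have "\<dots> = (\<Sum>j<r. \<Sum>s\<le>b. T j s) + (T r 0 + (\<Sum>s<b. T r (Suc s)))"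
  proof -
    have "{..r} = insert r {..<r}" by auto
    then have "(\<Sum>j\<le>r. \<Sum>s\<le>b. T j s) = (\<Sum>j<r. \<Sum>s\<le>b. T j s) + (\<Sum>s\<le>b. T r s)" by simp
    also have "(\<Sum>s\<le>b. T r s) = T r 0 + (\<Sum>s<b. T r (Suc s))" by (rule sum.atMost_shift)
    finally show ?thesis .
  qed
  finally have eq0: "(\<Sum>j<r. \<Sum>s\<le>b. T j s) + (T r 0 + (\<Sum>s<b. T r (Suc s))) = 0" by simp
  have Tr0: "T r 0 = l * (DA ^^ r) ((DB ^^ b) f)" by (simp add: T_def l_def)
  have main: "l ^ (b + 1) * (DA ^^ r) ((DB ^^ b) f) = - ((\<Sum>j<r. \<Sum>s\<le>b. l ^ b * T j s) + (\<Sum>s<b. l ^ b * T r (Suc s)))"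
  proof -
    have "l ^ (b + 1) * (DA ^^ r) ((DB ^^ b) f) = l ^ b * T r 0" by (simp add: Tr0 algebra_simps)
    also have "T r 0 = - ((\<Sum>j<r. \<Sum>s\<le>b. T j s) + (\<Sum>s<b. T r (Suc s)))"
      using eq0 by (simp add: add_eq_0_iff algebra_simps)
    finally have "l ^ (b + 1) * (DA ^^ r) ((DB ^^ b) f) = l ^ b * (- ((\<Sum>j<r. \<Sum>s\<le>b. T j s) + (\<Sum>s<b. T r (Suc s))))" .
    also have "\<dots> = - (l ^ b * (\<Sum>j<r. \<Sum>s\<le>b. T j s) + l ^ b * (\<Sum>s<b. T r (Suc s)))"
      by (simp only: mult_minus_right distrib_left)
    finally show ?thesis by (simp only: sum_distrib_left)
  qed
  have A: "l ^ b * T j s \<in> vs.span (KG DA DB l r d f b)" if "j < r" "s \<le> b" for j s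
  proof -
    have "l ^ b * T j s = (of_nat (b choose s) * (l ^ s * (DB ^^ s) (P j))) * l ^ (b - s) * (DA ^^ j) ((DB ^^ (b - s)) f)"
      using that by (simp add: T_def algebra_simps power_add[symmetric])
    moreover have "pdeg_le (of_nat (b choose s) * (l ^ s * (DB ^^ s) (P j))) ((b - (b - s) + 1) * d)"
    proof -
      have "pdeg_le (l ^ s * (DB ^^ s) (P j)) (s * d + d)"
        using that by (intro pdeg_le_mult pdeg_le_power dit_pdeg[OF dB] degP) (auto simp: l_def degP)
      then show ?thesis using that by (intro pdeg_le_of_nat_mult) (simp add: algebra_simps)
    qed
    ultimately have "l ^ b * T j s \<in> KG DA DB l r d f b" unfolding KG_def using that
      by (intro CollectI exI[of _ "of_nat (b choose s) * (l ^ s * (DB ^^ s) (P j))"] exI[of _ "b - s"] exI[of _ j]) auto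
    then show ?thesis by (rule vs.span_base)
  qed
  have B: "l ^ b * T r (Suc s) \<in> vs.span (KG DA DB l r d f b)" if "s < b" for s
  proof -
    have "l ^ b * T r (Suc s) = (of_nat (b choose Suc s) * l ^ s * (DB ^^ Suc s) l) * (l ^ (b - Suc s + 1) * (DA ^^ r) ((DB ^^ (b - Suc s)) f))"
    proof -
      have "b = s + (b - Suc s + 1)" using that by simp
      then have "l ^ b = l ^ s * l ^ (b - Suc s + 1)" by (metis power_add)
      then show ?thesis by (simp add: T_def l_def algebra_simps)
    qed
    moreover have "l ^ (b - Suc s + 1) * (DA ^^ r) ((DB ^^ (b - Suc s)) f) \<in> vs.span (KG DA DB l r d f (b - Suc s))"
      using less[of "b - Suc s"] that by (simp add: l_def)
    moreover have "pdeg_le (of_nat (b choose Suc s) * l ^ s * (DB ^^ Suc s) l) ((b - (b - Suc s)) * d)"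
    proof -
      have "pdeg_le (l ^ s * (DB ^^ Suc s) l) (s * d + d)"
        by (intro pdeg_le_mult pdeg_le_power dit_pdeg[OF dB] degP) (auto simp: l_def degP)
      then have "pdeg_le (of_nat (b choose Suc s) * (l ^ s * (DB ^^ Suc s) l)) (s * d + d)"
        by (rule pdeg_le_of_nat_mult)
      moreover have "(b - (b - Suc s)) * d = s * d + d" using that by simp
      ultimately show ?thesis by (simp only: mult.assoc)
    qed
    ultimately show ?thesis by (metis KG_mult diff_le_self)
  qed
  show ?case unfolding l_def[symmetric] main
    using A B by (intro vs.span_neg vs.span_add vs.span_sum) auto
qed


definition WG :: "('a::field fps fps \<Rightarrow> 'a fps fps) \<Rightarrow> ('a fps fps \<Rightarrow> 'a fps fps) \<Rightarrow> 'a fps fps \<Rightarrow> 'a fps fps \<Rightarrow> nat \<Rightarrow> nat \<Rightarrow> nat \<Rightarrow> 'a fps fps \<Rightarrow> nat \<Rightarrow> 'a fps fps set" where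
  "WG DA DB lA lB rA rB d f B = {m * lA ^ j * lB ^ i * (DA ^^ i) ((DB ^^ j) f) | m i j.
      i < rA \<and> j < rB \<and> pdeg_le m (B + (rB - 1 - j) * d + (rA - 1 - i) * d)}"

lemma WG_mono: "B \<le> B' \<Longrightarrow> vs.span (WG DA DB lA lB rA rB d f B) \<subseteq> vs.span (WG DA DB lA lB rA rB d f B')"
  apply (rule vs.span_mono)
  unfolding WG_def
  apply (auto intro: pdeg_le_mono)
  by (metis (mono_tags, lifting) add_le_mono1 pdeg_le_mono)

lemma WG_mult:
  assumes "x \<in> vs.span (WG DA DB lA lB rA rB d f B)" "pdeg_le q e"
  shows "q * x \<in> vs.span (WG DA DB lA lB rA rB d f (B + e))"
proof (rule span_mult[OF assms(1)])
  fix y assume "y \<in> WG DA DB lA lB rA rB d f B"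
  then obtain m i j where y: "y = m * lA ^ j * lB ^ i * (DA ^^ i) ((DB ^^ j) f)" "i < rA" "j < rB"
    "pdeg_le m (B + (rB - 1 - j) * d + (rA - 1 - i) * d)" unfolding WG_def by blast
  have "pdeg_le (q * m) (e + (B + (rB - 1 - j) * d + (rA - 1 - i) * d))" by (rule pdeg_le_mult[OF assms(2) y(4)])
  then have "pdeg_le (q * m) ((B + e) + (rB - 1 - j) * d + (rA - 1 - i) * d)" by (simp add: algebra_simps)
  then have "q * m * lA ^ j * lB ^ i * (DA ^^ i) ((DB ^^ j) f) \<in> WG DA DB lA lB rA rB d f (B + e)"
    unfolding WG_def using y(2,3) by fastforce
  then show "q * y \<in> vs.span (WG DA DB lA lB rA rB d f (B + e))" by (simp add: y(1) vs.span_base mult.assoc)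
qed

lemma WG_sym:
  assumes "\<And>x. DA (DB x) = DB (DA x)"
  shows "WG DA DB lA lB rA rB d f B = WG DB DA lB lA rB rA d f B"
proof -
  have c: "(DA ^^ i) ((DB ^^ j) f) = (DB ^^ j) ((DA ^^ i) f)" for i j by (rule dit_commute[of DA DB, OF assms])
  show ?thesis unfolding WG_def c
    by (auto simp: algebra_simps)
qed

lemma WG_D:
  fixes DA DB :: "'a::field fps fps \<Rightarrow> 'a fps fps"
  assumes dA: "deriv_op DA" and dB: "deriv_op DB" and comm: "\<And>x. DA (DB x) = DB (DA x)"
    and dlA: "pdeg_le lA d" and dlB: "pdeg_le lB d"
    and K: "\<And>b. b < rB \<Longrightarrow> lA ^ (b + 1) * (DA ^^ rA) ((DB ^^ b) f) \<in> vs.span (KG DA DB lA rA d f b)"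
    and x: "x \<in> vs.span (WG DA DB lA lB rA rB d f B)"
  shows "(lA * lB) * DA x \<in> vs.span (WG DA DB lA lB rA rB d f (B + 2 * d))"
proof (rule span_map[OF x, where \<phi> = "\<lambda>x. (lA * lB) * DA x"])
  show "lA * lB * DA 0 = 0" by (simp add: dzero[OF dA])
next
  fix c y z show "lA * lB * DA (sc c y + z) = sc c (lA * lB * DA y) + lA * lB * DA z"
    by (simp add: dadd[OF dA] dsc[OF dA] sc_add_mult)
next
  let ?W = "vs.span (WG DA DB lA lB rA rB d f (B + 2 * d))"
  fix y assume "y \<in> WG DA DB lA lB rA rB d f B"
  then obtain m i j where y: "y = m * lA ^ j * lB ^ i * (DA ^^ i) ((DB ^^ j) f)" "i < rA" "j < rB"
    and dm: "pdeg_le m (B + (rB - 1 - j) * d + (rA - 1 - i) * d)" unfolding WG_def by blast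
  define w where "w = (rB - 1 - j) * d + (rA - 1 - i) * d"
  define M' where "M' = lA * lB * DA m + of_nat j * lB * DA lA * m + of_nat i * lA * DA lB * m"
  have DAy: "lA * lB * DA y = M' * lA ^ j * lB ^ i * (DA ^^ i) ((DB ^^ j) f)
       + lA * lB * m * lA ^ j * lB ^ i * (DA ^^ Suc i) ((DB ^^ j) f)"
  proof -
    have 1: "lA * lB * DA y = lA * lB * DA (m * lA ^ j * lB ^ i) * (DA ^^ i) ((DB ^^ j) f)
         + lA * lB * m * lA ^ j * lB ^ i * (DA ^^ Suc i) ((DB ^^ j) f)"
      by (simp add: y(1) dmult[OF dA] algebra_simps)
    have "lA * lB * DA (m * lA ^ j * lB ^ i) = lA * lB * DA m * lA ^ j * lB ^ i
        + m * lB * (lA * DA (lA ^ j)) * lB ^ i + m * lA * lA ^ j * (lB * DA (lB ^ i))"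
      by (simp add: dmult[OF dA] algebra_simps)
    also have "\<dots> = M' * lA ^ j * lB ^ i"
      by (simp add: dpow[OF dA] M'_def algebra_simps)
    finally show ?thesis using 1 by simp
  qed
  have dM': "pdeg_le M' (B + w + 2 * d)"
  proof -
    have m: "pdeg_le m (B + w)" using dm by (simp add: w_def add.assoc)
    have a: "pdeg_le (DA m) (B + w)" by (rule dpdeg[OF dA m])
    have b: "pdeg_le (DA lA) d" "pdeg_le (DA lB) d" by (rule dpdeg[OF dA dlA], rule dpdeg[OF dA dlB])
    have "pdeg_le (lA * lB * DA m) (d + d + (B + w))" by (intro pdeg_le_mult dlA dlB a)
    moreover have "pdeg_le (of_nat j * lB * DA lA * m) (d + d + (B + w))"
    proof -
      have "pdeg_le (lB * (DA lA * m)) (d + (d + (B + w)))" by (intro pdeg_le_mult dlB b m)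
      then have "pdeg_le (of_nat j * (lB * (DA lA * m))) (d + (d + (B + w)))" by (rule pdeg_le_of_nat_mult)
      then show ?thesis by (simp add: mult.assoc add.assoc)
    qed
    moreover have "pdeg_le (of_nat i * lA * DA lB * m) (d + d + (B + w))"
    proof -
      have "pdeg_le (lA * (DA lB * m)) (d + (d + (B + w)))" by (intro pdeg_le_mult dlA b m)
      then have "pdeg_le (of_nat i * (lA * (DA lB * m))) (d + (d + (B + w)))" by (rule pdeg_le_of_nat_mult)
      then show ?thesis by (simp add: mult.assoc add.assoc)
    qed
    moreover have "d + d + (B + w) = B + w + 2 * d" by simp
    ultimately show ?thesis unfolding M'_def by (metis pdeg_le_add)
  qed
  have T1: "M' * lA ^ j * lB ^ i * (DA ^^ i) ((DB ^^ j) f) \<in> ?W"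
  proof (rule vs.span_base)
    have "pdeg_le M' ((B + 2 * d) + (rB - 1 - j) * d + (rA - 1 - i) * d)"
      using dM' by (simp add: w_def algebra_simps)
    then show "M' * lA ^ j * lB ^ i * (DA ^^ i) ((DB ^^ j) f) \<in> WG DA DB lA lB rA rB d f (B + 2 * d)"
      unfolding WG_def using y(2,3) by fastforce
  qed
  have T2: "lA * lB * m * lA ^ j * lB ^ i * (DA ^^ Suc i) ((DB ^^ j) f) \<in> ?W"
  proof (cases "Suc i < rA")
    case True
    have "pdeg_le (m * lA) ((B + 2 * d) + (rB - 1 - j) * d + (rA - 1 - Suc i) * d)"
    proof -
      define k where "k = rA - 1 - Suc i"
      have k1: "rA - 1 - i = Suc k" using True unfolding k_def by linarith
      define u where "u = rB - 1 - j"
      have dm': "pdeg_le m (B + u * d + Suc k * d)" using dm by (simp only: u_def[symmetric] k1)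
      have "pdeg_le (m * lA) ((B + u * d + Suc k * d) + d)" by (rule pdeg_le_mult[OF dm' dlA])
      then show ?thesis unfolding k_def[symmetric] u_def[symmetric] by (rule pdeg_le_mono) (simp add: algebra_simps)
    qed
    then have "(m * lA) * lA ^ j * lB ^ Suc i * (DA ^^ Suc i) ((DB ^^ j) f) \<in> WG DA DB lA lB rA rB d f (B + 2 * d)"
      unfolding WG_def using True y(3) by fastforce
    then show ?thesis by (intro vs.span_base) (simp add: algebra_simps)
  next
    case False
    then have i: "Suc i = rA" using y(2) by simp
    have eq: "lA * lB * m * lA ^ j * lB ^ i * (DA ^^ Suc i) ((DB ^^ j) f) = (m * lB ^ rA) * (lA ^ (j + 1) * (DA ^^ rA) ((DB ^^ j) f))"
      using i by (simp add: algebra_simps flip: i)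
    show ?thesis unfolding eq
    proof (rule span_mult[OF K[OF y(3)]])
      fix z assume "z \<in> KG DA DB lA rA d f j"
      then obtain c b' \<alpha> where z: "z = c * lA ^ b' * (DA ^^ \<alpha>) ((DB ^^ b') f)" "b' \<le> j" "\<alpha> < rA"
        "pdeg_le c ((j - b' + 1) * d)" unfolding KG_def by blast
      have eqz: "m * lB ^ rA * z = (m * lB ^ (rA - \<alpha>) * c) * lA ^ b' * lB ^ \<alpha> * (DA ^^ \<alpha>) ((DB ^^ b') f)"
      proof -
        have "lB ^ rA = lB ^ (rA - \<alpha>) * lB ^ \<alpha>" using z(3) by (simp add: power_add[symmetric])
        then show ?thesis by (simp add: z(1) algebra_simps)
      qed
      have "pdeg_le (m * lB ^ (rA - \<alpha>) * c) ((B + (rB - 1 - j) * d + (rA - 1 - i) * d) + (rA - \<alpha>) * d + (j - b' + 1) * d)"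
        by (intro pdeg_le_mult dm pdeg_le_power dlB z(4))
      moreover have "(B + (rB - 1 - j) * d + (rA - 1 - i) * d) + (rA - \<alpha>) * d + (j - b' + 1) * d
          = (B + 2 * d) + (rB - 1 - b') * d + (rA - 1 - \<alpha>) * d"
      proof -
        have "(rB - 1 - j) + (rA - 1 - i) + (rA - \<alpha>) + (j - b' + 1) = 2 + (rB - 1 - b') + (rA - 1 - \<alpha>)"
          using z(2,3) y(3) i by arith
        then have "((rB - 1 - j) + (rA - 1 - i) + (rA - \<alpha>) + (j - b' + 1)) * d = (2 + (rB - 1 - b') + (rA - 1 - \<alpha>)) * d"
          by simp
        then show ?thesis by (simp only: add_mult_distrib mult_1)
      qed
      ultimately have "pdeg_le (m * lB ^ (rA - \<alpha>) * c) ((B + 2 * d) + (rB - 1 - b') * d + (rA - 1 - \<alpha>) * d)" by metis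
      then have "(m * lB ^ (rA - \<alpha>) * c) * lA ^ b' * lB ^ \<alpha> * (DA ^^ \<alpha>) ((DB ^^ b') f) \<in> WG DA DB lA lB rA rB d f (B + 2 * d)"
        unfolding WG_def using z(2,3) y(3) by fastforce
      then show "m * lB ^ rA * z \<in> ?W" unfolding eqz by (rule vs.span_base)
    qed
  qed
  show "lA * lB * DA y \<in> ?W" unfolding DAy by (rule vs.span_add[OF T1 T2])
qed


lemma XY_mult_nth: "(fps_X ^ a * (YY ^ b * (H :: 'a::comm_ring_1 fps fps))) $ p $ q =
    (if a \<le> p \<and> b \<le> q then H $ (p - a) $ (q - b) else 0)"
  by (simp add: fps_X_power_mult_nth YY_def fps_const_power fps_X_power_mult_nth)

lemma XY_nth: "(fps_X ^ u * YY ^ v :: 'a::comm_ring_1 fps fps) $ p $ q = (if p = u \<and> q = v then 1 else 0)"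
  using XY_mult_nth[of u v 1 p q] by (auto simp: fps_one_nth)

lemma sc_XY_nth: "sc c (fps_X ^ u * YY ^ v :: 'a::field fps fps) $ p $ q = (if p = u \<and> q = v then c else 0)"
  by (simp add: XY_nth)

lemma pdeg_expand:
  fixes m :: "'a::field fps fps"
  assumes "pdeg_le m e"
  shows "m = (\<Sum>u\<le>e. \<Sum>v\<le>e. sc (m $ u $ v) (fps_X ^ u * YY ^ v))"
proof (rule fps_ext, rule fps_ext)
  fix p q
  have i: "(\<Sum>v\<le>e. if p = u \<and> q = v then m $ u $ v else 0) = (if p = u \<and> q \<le> e then m $ u $ q else 0)" for u
    by (cases "p = u") (simp_all add: sum.delta')
  have "(\<Sum>u\<le>e. \<Sum>v\<le>e. sc (m $ u $ v) (fps_X ^ u * YY ^ v)) $ p $ q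
      = (\<Sum>u\<le>e. \<Sum>v\<le>e. if p = u \<and> q = v then m $ u $ v else 0)"
    by (simp only: fps_sum_nth sc_XY_nth)
  also have "\<dots> = (if p \<le> e \<and> q \<le> e then m $ p $ q else 0)"
    unfolding i by (cases "q \<le> e") (simp_all add: sum.delta')
  also have "\<dots> = m $ p $ q" using assms unfolding pdeg_le_def by (metis add_leD1 add_leD2)
  finally show "m $ p $ q = (\<Sum>u\<le>e. \<Sum>v\<le>e. sc (m $ u $ v) (fps_X ^ u * YY ^ v)) $ p $ q" by simp
qed

lemma count_dep:
  fixes F :: "'i \<Rightarrow> 'a::field fps fps"
  assumes I: "finite I" and S: "finite S" and c: "card S < card I" and F: "\<And>x. x \<in> I \<Longrightarrow> F x \<in> vs.span S"
  shows "\<exists>c. (\<exists>x\<in>I. c x \<noteq> 0) \<and> (\<Sum>x\<in>I. sc (c x) (F x)) = 0"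
proof (cases "inj_on F I")
  case False
  then obtain x y where xy: "x \<in> I" "y \<in> I" "x \<noteq> y" "F x = F y" unfolding inj_on_def by blast
  define c where "c z = (if z = x then 1 else if z = y then -1 else (0::'a))" for z
  have "(\<Sum>z\<in>I. sc (c z) (F z)) = (\<Sum>z\<in>I. (if z = x then F x else 0) + (if z = y then - F y else 0))"
    by (rule sum.cong) (auto simp: c_def xy(3) vs.scale_minus_left)
  also have "\<dots> = 0" using xy I by (simp add: sum.distrib)
  finally show ?thesis using xy(1) by (intro exI[of _ c]) (auto simp: c_def)
next
  case True
  have fin: "finite (F ` I)" using I by simp
  have card: "card (F ` I) = card I" using True by (simp add: card_image)
  have "vs.dependent (F ` I)"
  proof (rule ccontr)
    assume "\<not> vs.dependent (F ` I)"
    then have "card (F ` I) \<le> card S" using vs.independent_span_bound[OF S] F by blast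
    then show False using c card by simp
  qed
  then obtain u where u: "\<exists>v\<in>F ` I. u v \<noteq> 0" "(\<Sum>v\<in>F ` I. sc (u v) v) = 0"
    using vs.dependent_finite[OF fin] by blast
  have "(\<Sum>x\<in>I. sc (u (F x)) (F x)) = (\<Sum>v\<in>F ` I. sc (u v) v)"
    using sum.reindex[OF True, of "\<lambda>v. sc (u v) v"] by simp
  then show ?thesis using u by (intro exI[of _ "\<lambda>x. u (F x)"]) auto
qed

lemma poly2_nth[simp]: "poly2_to_fps2 p $ i $ j = coeff (coeff p i) j"
  by (simp add: poly2_to_fps2_def)

lemma tdeg2_finite: "finite {i + j | i j. coeff (coeff (p :: 'a::zero poly poly) i) j \<noteq> 0}"
proof -
  let ?M = "Max (insert 0 ((\<lambda>i. degree (coeff p i)) ` {..degree p}))"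
  have "{i + j | i j. coeff (coeff p i) j \<noteq> 0} \<subseteq> (\<lambda>(i, j). i + j) ` ({..degree p} \<times> {..?M})"
  proof
    fix x assume "x \<in> {i + j | i j. coeff (coeff p i) j \<noteq> 0}"
    then obtain i j where x: "x = i + j" "coeff (coeff p i) j \<noteq> 0" by blast
    then have "coeff p i \<noteq> 0" by auto
    then have i: "i \<le> degree p" by (simp add: le_degree)
    have "j \<le> degree (coeff p i)" using x(2) by (simp add: le_degree)
    also have "\<dots> \<le> ?M" using i by (intro Max_ge) auto
    finally show "x \<in> (\<lambda>(i, j). i + j) ` ({..degree p} \<times> {..?M})" using i x(1) by auto
  qed
  then show ?thesis by (rule finite_subset) auto
qed

lemma pdeg_poly2: "pdeg_le (poly2_to_fps2 p) (tdeg2 p)"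
  unfolding pdeg_le_def tdeg2_def using tdeg2_finite[of p] by (auto intro!: Max_ge)

lemma poly2_nz: "p \<noteq> 0 \<Longrightarrow> poly2_to_fps2 p \<noteq> 0"
proof
  assume "p \<noteq> 0" "poly2_to_fps2 p = 0"
  then obtain i where "coeff p i \<noteq> 0" by (metis leading_coeff_0_iff)
  then obtain j where "coeff (coeff p i) j \<noteq> 0" by (metis leading_coeff_0_iff)
  then have "poly2_to_fps2 p $ i $ j \<noteq> 0" by simp
  then show False using \<open>poly2_to_fps2 p = 0\<close> by simp
qed

lemma tdeg_le_op_deg2: "x \<in> set L \<Longrightarrow> tdeg2 x \<le> op_deg2 L"
  unfolding op_deg2_def by (intro Max_ge) auto


fun gk :: "'a::field fps fps \<Rightarrow> nat \<Rightarrow> 'a fps fps" where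
  "gk f 0 = f"
| "gk f (Suc k) = YY * D2 (gk f k) - fps_X * D1 (gk f k) - of_nat (Suc k) * gk f k"

definition Fsrc :: "'a::field fps fps \<Rightarrow> nat \<Rightarrow> nat \<Rightarrow> nat \<Rightarrow> nat \<Rightarrow> 'a fps fps" where
  "Fsrc f N a i k = fps_X ^ a * (YY ^ (a + 2 * N - i - k) * (D1 ^^ i) (gk f k))"

locale dset =
  fixes f :: "'a::field_char_0 fps fps" and L1 L2 :: "'a poly poly list" and d :: nat
  assumes nz1: "op_nonzero L1" and nz2: "op_nonzero L2"
    and a1: "apply_op_x1 L1 f = 0" and a2: "apply_op_x2 L2 f = 0"
    and dg1: "op_deg2 L1 \<le> d" and dg2: "op_deg2 L2 \<le> d" and fnz: "f \<noteq> 0"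
begin

definition "r1 = length L1 - 1"
definition "r2 = length L2 - 1"
definition "l1 = poly2_to_fps2 (last L1)"
definition "l2 = poly2_to_fps2 (last L2)"
definition "Lam = l1 * l2"
definition "W B = vs.span (WG D1 D2 l1 l2 r1 r2 d f B)"

lemma len1: "length L1 = Suc r1" using nz1 by (simp add: op_nonzero_def r1_def)
lemma len2: "length L2 = Suc r2" using nz2 by (simp add: op_nonzero_def r2_def)

lemma ann1: "(\<Sum>j\<le>r1. poly2_to_fps2 (L1 ! j) * (D1 ^^ j) f) = 0"
  using a1 by (simp add: apply_op_x1_def len1 lessThan_Suc_atMost)
lemma ann2: "(\<Sum>j\<le>r2. poly2_to_fps2 (L2 ! j) * (D2 ^^ j) f) = 0"
  using a2 by (simp add: apply_op_x2_def len2 lessThan_Suc_atMost)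

lemma last1: "poly2_to_fps2 (L1 ! r1) = l1"
  using nz1 by (simp add: l1_def last_conv_nth op_nonzero_def r1_def)
lemma last2: "poly2_to_fps2 (L2 ! r2) = l2"
  using nz2 by (simp add: l2_def last_conv_nth op_nonzero_def r2_def)

lemma l1nz: "l1 \<noteq> 0" using nz1 by (simp add: l1_def op_nonzero_def poly2_nz)
lemma l2nz: "l2 \<noteq> 0" using nz2 by (simp add: l2_def op_nonzero_def poly2_nz)
lemma Lamnz: "Lam \<noteq> 0" using l1nz l2nz by (simp add: Lam_def)

lemma degP1: "j \<le> r1 \<Longrightarrow> pdeg_le (poly2_to_fps2 (L1 ! j)) d"
proof -
  assume "j \<le> r1"
  then have "L1 ! j \<in> set L1" using len1 by (intro nth_mem) simp
  then have "tdeg2 (L1 ! j) \<le> d" using dg1 tdeg_le_op_deg2 le_trans by blast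
  then show ?thesis by (rule pdeg_le_mono[OF pdeg_poly2])
qed
lemma degP2: "j \<le> r2 \<Longrightarrow> pdeg_le (poly2_to_fps2 (L2 ! j)) d"
proof -
  assume "j \<le> r2"
  then have "L2 ! j \<in> set L2" using len2 by (intro nth_mem) simp
  then have "tdeg2 (L2 ! j) \<le> d" using dg2 tdeg_le_op_deg2 le_trans by blast
  then show ?thesis by (rule pdeg_le_mono[OF pdeg_poly2])
qed

lemma dl1: "pdeg_le l1 d" using degP1[of r1] last1 by simp
lemma dl2: "pdeg_le l2 d" using degP2[of r2] last2 by simp
lemma dLam: "pdeg_le Lam (2 * d)" using pdeg_le_mult[OF dl1 dl2] by (simp add: Lam_def mult_2)

lemma r1pos: "r1 \<ge> 1"
proof (rule ccontr)
  assume "\<not> r1 \<ge> 1" then have "r1 = 0" by simp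
  then have "l1 * f = 0" using ann1 last1 by simp
  then show False using l1nz fnz by simp
qed
lemma r2pos: "r2 \<ge> 1"
proof (rule ccontr)
  assume "\<not> r2 \<ge> 1" then have "r2 = 0" by simp
  then have "l2 * f = 0" using ann2 last2 by simp
  then show False using l2nz fnz by simp
qed

lemma K1: "l1 ^ (b + 1) * (D1 ^^ r1) ((D2 ^^ b) f) \<in> vs.span (KG D1 D2 l1 r1 d f b)"
  using Kred[OF deriv_op_D1 deriv_op_D2 D1_D2_commute, of r1 "\<lambda>j. poly2_to_fps2 (L1 ! j)" d f b]
  using degP1 ann1 last1 by simp

lemma K2: "l2 ^ (b + 1) * (D2 ^^ r2) ((D1 ^^ b) f) \<in> vs.span (KG D2 D1 l2 r2 d f b)"
  using Kred[OF deriv_op_D2 deriv_op_D1 D1_D2_commute[symmetric], of r2 "\<lambda>j. poly2_to_fps2 (L2 ! j)" d f b]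
  using degP2 ann2 last2 by simp

lemma W_sym: "W B = vs.span (WG D2 D1 l2 l1 r2 r1 d f B)"
  unfolding W_def using WG_sym[of D1 D2, OF D1_D2_commute] by metis

lemma WD1: "x \<in> W B \<Longrightarrow> Lam * D1 x \<in> W (B + 2 * d)"
  unfolding W_def Lam_def
  by (rule WG_D[OF deriv_op_D1 deriv_op_D2 D1_D2_commute dl1 dl2 K1])

lemma WD2: "x \<in> W B \<Longrightarrow> Lam * D2 x \<in> W (B + 2 * d)"
  unfolding W_sym Lam_def mult.commute[of l1 l2]
  by (rule WG_D[OF deriv_op_D2 deriv_op_D1 D1_D2_commute[symmetric] dl2 dl1 K2])

lemma W_mult: "x \<in> W B \<Longrightarrow> pdeg_le q e \<Longrightarrow> q * x \<in> W (B + e)"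
  unfolding W_def by (rule WG_mult)

lemma W_mono: "x \<in> W B \<Longrightarrow> B \<le> B' \<Longrightarrow> x \<in> W B'"
  unfolding W_def using WG_mono by blast

lemma f_W: "f \<in> W 0"
proof -
  have "1 * l1 ^ 0 * l2 ^ 0 * (D1 ^^ 0) ((D2 ^^ 0) f) \<in> WG D1 D2 l1 l2 r1 r2 d f 0"
    unfolding WG_def using r1pos r2pos by (intro CollectI exI[of _ 1] exI[of _ 0]) auto
  then show ?thesis unfolding W_def by (simp add: vs.span_base)
qed


lemma W_diff: "x \<in> W B \<Longrightarrow> y \<in> W B \<Longrightarrow> x - y \<in> W B"
  unfolding W_def by (rule vs.span_diff)

lemma step_D:
  assumes D: "D = D1 \<or> D = D2" and h: "Lam ^ j * h \<in> W B"
  shows "Lam ^ (j + 1) * D h \<in> W (B + 2 * d)"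
proof -
  have dD: "deriv_op D" using D deriv_op_D1 deriv_op_D2 by blast
  have WD: "Lam * D x \<in> W (B + 2 * d)" if "x \<in> W B" for x using D WD1 WD2 that by blast
  have "Lam * D (Lam ^ j * h) = (Lam * D (Lam ^ j)) * h + Lam ^ (j + 1) * D h"
    by (simp add: dmult[OF dD] algebra_simps)
  also have "Lam * D (Lam ^ j) = of_nat j * D Lam * Lam ^ j" by (rule dpow[OF dD])
  finally have eq: "Lam ^ (j + 1) * D h = Lam * D (Lam ^ j * h) - (of_nat j * D Lam) * (Lam ^ j * h)"
    by (simp add: algebra_simps)
  have "pdeg_le (of_nat j * D Lam) (2 * d)" by (intro pdeg_le_of_nat_mult dpdeg[OF dD] dLam)
  then have "(of_nat j * D Lam) * (Lam ^ j * h) \<in> W (B + 2 * d)" by (rule W_mult[OF h])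
  then show ?thesis unfolding eq by (intro W_diff WD h)
qed

lemma step_theta:
  assumes h: "Lam ^ j * h \<in> W B"
  shows "Lam ^ (j + 1) * (YY * D2 h - fps_X * D1 h - of_nat c * h) \<in> W (B + 2 * d + 1)"
proof -
  have eq: "Lam ^ (j + 1) * (YY * D2 h - fps_X * D1 h - of_nat c * h) =
     YY * (Lam ^ (j + 1) * D2 h) - fps_X * (Lam ^ (j + 1) * D1 h) - (of_nat c * Lam) * (Lam ^ j * h)"
    by (simp add: algebra_simps)
  have 1: "YY * (Lam ^ (j + 1) * D2 h) \<in> W (B + 2 * d + 1)"
    by (rule W_mult[OF step_D[OF _ h] pdeg_le_YY]) simp
  have 2: "fps_X * (Lam ^ (j + 1) * D1 h) \<in> W (B + 2 * d + 1)"
    by (rule W_mult[OF step_D[OF _ h] pdeg_le_X]) simp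
  have "(of_nat c * Lam) * (Lam ^ j * h) \<in> W (B + 2 * d)"
    by (rule W_mult[OF h]) (intro pdeg_le_of_nat_mult dLam)
  then have 3: "(of_nat c * Lam) * (Lam ^ j * h) \<in> W (B + 2 * d + 1)" by (rule W_mono) simp
  show ?thesis unfolding eq by (intro W_diff 1 2 3)
qed

lemma g_W: "Lam ^ k * gk f k \<in> W (k * (2 * d + 1))"
proof (induction k)
  case 0 then show ?case using f_W by simp
next
  case (Suc k)
  have "Lam ^ (k + 1) * gk f (Suc k) \<in> W (k * (2 * d + 1) + 2 * d + 1)"
    unfolding gk.simps by (rule step_theta[OF Suc])
  then show ?case by (simp add: algebra_simps)
qed

lemma Dg_W: "Lam ^ (k + i) * (D1 ^^ i) (gk f k) \<in> W (k * (2 * d + 1) + i * (2 * d))"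
proof (induction i)
  case 0 then show ?case using g_W by simp
next
  case (Suc i)
  have "Lam ^ (k + i + 1) * D1 ((D1 ^^ i) (gk f k)) \<in> W (k * (2 * d + 1) + i * (2 * d) + 2 * d)"
    by (rule step_D[OF _ Suc]) simp
  then show ?case by (simp add: algebra_simps)
qed

lemma F_W:
  assumes "a \<le> N" "i \<le> N" "k \<le> N"
  shows "Lam ^ (2 * N) * Fsrc f N a i k \<in> W (4 * N * d + 4 * N)"
proof -
  define s where "s = 2 * N - (k + i)"
  have s: "k + i + s = 2 * N" using assms by (simp add: s_def)
  have eq: "Lam ^ (2 * N) * Fsrc f N a i k = (Lam ^ s * fps_X ^ a * YY ^ (a + 2 * N - i - k)) * (Lam ^ (k + i) * (D1 ^^ i) (gk f k))"
  proof -
    have "Lam ^ (2 * N) = Lam ^ s * Lam ^ (k + i)" by (simp add: power_add[symmetric] s[symmetric] add.commute)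
    then show ?thesis by (simp add: Fsrc_def algebra_simps)
  qed
  have pd: "pdeg_le (Lam ^ s * fps_X ^ a * YY ^ (a + 2 * N - i - k)) (s * (2 * d) + a * 1 + (a + 2 * N - i - k) * 1)"
    by (intro pdeg_le_mult pdeg_le_power dLam pdeg_le_X pdeg_le_YY)
  have "Lam ^ (2 * N) * Fsrc f N a i k \<in> W (k * (2 * d + 1) + i * (2 * d) + (s * (2 * d) + a * 1 + (a + 2 * N - i - k) * 1))"
    unfolding eq by (rule W_mult[OF Dg_W pd])
  moreover have "k * (2 * d + 1) + i * (2 * d) + (s * (2 * d) + a * 1 + (a + 2 * N - i - k) * 1) \<le> 4 * N * d + 4 * N"
  proof -
    have "k * (2 * d + 1) + i * (2 * d) + s * (2 * d) = (k + i + s) * (2 * d) + k" by (simp add: algebra_simps)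
    also have "\<dots> = 4 * N * d + k" by (simp add: s)
    finally have e: "k * (2 * d + 1) + i * (2 * d) + s * (2 * d) = 4 * N * d + k" .
    show ?thesis using e assms by linarith
  qed
  ultimately show ?thesis by (rule W_mono)
qed
end

lemma YY_mult_nth2: "(YY * (H :: 'a::comm_ring_1 fps fps)) $ p $ q = (if q = 0 then 0 else H $ p $ (q - 1))"
  by (simp add: YY_def)
lemma X_mult_nth2: "(fps_X * (H :: 'a::comm_ring_1 fps fps)) $ p $ q = (if p = 0 then 0 else H $ (p - 1) $ q)"
  by simp
lemma D1_nth2: "D1 (H :: 'a::field fps fps) $ p $ q = of_nat (p + 1) * H $ (p + 1) $ q"
  by (simp add: D1_def fps_of_nat[symmetric])
lemma D2_nth2: "D2 (H :: 'a::field fps fps) $ p $ q = of_nat (q + 1) * H $ p $ (q + 1)"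
  by (simp del: fps_X_mult_nth)

lemma gk_nth: "gk f k $ p $ q = (\<Prod>m\<in>{1..k}. (of_nat q - of_nat p - of_nat m :: 'a::field)) * f $ p $ q"
proof (induction k)
  case 0 then show ?case by simp
next
  case (Suc k)
  have a: "(YY * D2 (gk f k)) $ p $ q = of_nat q * gk f k $ p $ q"
    by (cases q) (simp_all add: YY_mult_nth2 D2_nth2)
  have b: "(fps_X * D1 (gk f k)) $ p $ q = of_nat p * gk f k $ p $ q"
    by (cases p) (simp_all add: X_mult_nth2 D1_nth2 del: fps_X_mult_nth)
  have "gk f (Suc k) $ p $ q = (of_nat q - of_nat p - of_nat (Suc k)) * gk f k $ p $ q"
    by (simp only: gk.simps fps_sub_nth a b of_nat_mult_nth2) (simp add: algebra_simps)
  then show ?case by (simp add: Suc prod.cl_ivl_Suc algebra_simps)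
qed

lemma D1it_nth: "((D1 ^^ i) (H :: 'a::field fps fps)) $ p $ q = pochhammer (of_nat (p + 1)) i * H $ (p + i) $ q"
proof (induction i arbitrary: p)
  case 0 then show ?case by simp
next
  case (Suc i)
  have "((D1 ^^ Suc i) H) $ p $ q = of_nat (p + 1) * ((D1 ^^ i) H) $ (p + 1) $ q"
    by (simp add: D1_nth2)
  also have "\<dots> = of_nat (p + 1) * (pochhammer (of_nat (p + 1) + 1) i * H $ (p + Suc i) $ q)"
    by (simp add: Suc)
  also have "\<dots> = pochhammer (of_nat (p + 1)) (Suc i) * H $ (p + Suc i) $ q"
    by (simp add: pochhammer_rec)
  finally show ?case .
qed

lemma derivit_nth: "((fps_deriv ^^ i) (u :: 'a::field fps)) $ n = pochhammer (of_nat (n + 1)) i * u $ (n + i)"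
proof (induction i arbitrary: n)
  case 0 then show ?case by simp
next
  case (Suc i)
  have "((fps_deriv ^^ Suc i) u) $ n = of_nat (n + 1) * ((fps_deriv ^^ i) u) $ (n + 1)"
    by simp
  also have "\<dots> = of_nat (n + 1) * (pochhammer (of_nat (n + 1) + 1) i * u $ (n + Suc i))"
    by (simp add: Suc)
  also have "\<dots> = pochhammer (of_nat (n + 1)) (Suc i) * u $ (n + Suc i)"
    by (simp add: pochhammer_rec)
  finally show ?case .
qed

lemma Fsrc_nth:
  assumes "i + k \<le> 2 * N"
  shows "Fsrc f N a i k $ p $ q = (if a \<le> p \<and> a + 2 * N - i - k \<le> q then
     pochhammer (of_nat (p - a + 1)) i * (\<Prod>m\<in>{1..k}. (of_nat (q - (a + 2 * N - i - k)) - of_nat (p - a + i) - of_nat m :: 'a::field))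
       * f $ (p - a + i) $ (q - (a + 2 * N - i - k)) else 0)"
  by (simp add: Fsrc_def XY_mult_nth D1it_nth gk_nth)


definition "Iset N = {..N} \<times> {..N} \<times> ({..N} :: nat set)"

context dset begin

definition "MonGen Bm = (\<lambda>(u, v, i, j). fps_X ^ u * YY ^ v * (l1 ^ j * l2 ^ i * (D1 ^^ i) ((D2 ^^ j) f)))
   ` ({..Bm} \<times> {..Bm} \<times> {..<r1} \<times> {..<r2})"

lemma MonGen_fin: "finite (MonGen Bm)" by (simp add: MonGen_def)

lemma MonGen_card: "card (MonGen Bm) \<le> (Bm + 1) * ((Bm + 1) * (r1 * r2))"
proof -
  have "card (MonGen Bm) \<le> card ({..Bm} \<times> {..Bm} \<times> {..<r1} \<times> {..<r2})"
    unfolding MonGen_def by (rule card_image_le) simp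
  also have "\<dots> = (Bm + 1) * ((Bm + 1) * (r1 * r2))" by (simp add: card_cartesian_product)
  finally show ?thesis .
qed

lemma W_MonGen: "W B \<subseteq> vs.span (MonGen (B + (r1 + r2) * d))"
proof -
  let ?Bm = "B + (r1 + r2) * d"
  have "WG D1 D2 l1 l2 r1 r2 d f B \<subseteq> vs.span (MonGen ?Bm)"
  proof
    fix y assume "y \<in> WG D1 D2 l1 l2 r1 r2 d f B"
    then obtain m i j where y: "y = m * l1 ^ j * l2 ^ i * (D1 ^^ i) ((D2 ^^ j) f)" "i < r1" "j < r2"
      "pdeg_le m (B + (r2 - 1 - j) * d + (r1 - 1 - i) * d)" unfolding WG_def by blast
    have "B + (r2 - 1 - j) * d + (r1 - 1 - i) * d \<le> ?Bm"
    proof -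
      have "(r2 - 1 - j) * d \<le> r2 * d" "(r1 - 1 - i) * d \<le> r1 * d" by (simp_all add: mult_le_mono1)
      then show ?thesis by (simp add: algebra_simps)
    qed
    then have pm: "pdeg_le m ?Bm" using y(4) pdeg_le_mono by blast
    let ?R = "l1 ^ j * l2 ^ i * (D1 ^^ i) ((D2 ^^ j) f)"
    have "y = m * ?R" by (simp add: y(1) algebra_simps)
    also have "\<dots> = (\<Sum>u\<le>?Bm. \<Sum>v\<le>?Bm. sc (m $ u $ v) (fps_X ^ u * YY ^ v)) * ?R"
      using pdeg_expand[OF pm] by simp
    also have "\<dots> = (\<Sum>u\<le>?Bm. \<Sum>v\<le>?Bm. sc (m $ u $ v) (fps_X ^ u * YY ^ v * ?R))"
      by (simp add: sum_distrib_right sc_def mult.assoc)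
    also have "\<dots> \<in> vs.span (MonGen ?Bm)"
    proof (intro vs.span_sum vs.span_scale vs.span_base)
      fix u v assume "u \<in> {..?Bm}" "v \<in> {..?Bm}"
      then show "fps_X ^ u * YY ^ v * ?R \<in> MonGen ?Bm"
        unfolding MonGen_def using y(2,3) by (intro image_eqI[of _ _ "(u, v, i, j)"]) auto
    qed
    finally show "y \<in> vs.span (MonGen ?Bm)" .
  qed
  then show ?thesis unfolding W_def by (rule vs.span_minimal[OF _ vs.subspace_span])
qed

lemma main_rel:
  assumes card: "(4 * N * d + 4 * N + (r1 + r2) * d + 1) * ((4 * N * d + 4 * N + (r1 + r2) * d + 1) * (r1 * r2)) < (N + 1) * ((N + 1) * (N + 1))"
  shows "\<exists>c. (\<exists>x\<in>Iset N. c x \<noteq> 0) \<and> (\<Sum>x\<in>Iset N. sc (c x) (Fsrc f N (fst x) (fst (snd x)) (snd (snd x)))) = 0"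
proof -
  let ?B = "4 * N * d + 4 * N"
  let ?S = "MonGen (?B + (r1 + r2) * d)"
  let ?F = "\<lambda>x. Lam ^ (2 * N) * Fsrc f N (fst x) (fst (snd x)) (snd (snd x))"
  have cI: "card (Iset N) = (N + 1) * ((N + 1) * (N + 1))" by (simp add: Iset_def card_cartesian_product)
  have "card ?S < card (Iset N)" using MonGen_card[of "?B + (r1 + r2) * d"] card cI by linarith
  moreover have "?F x \<in> vs.span ?S" if "x \<in> Iset N" for x
    using F_W[of "fst x" N "fst (snd x)" "snd (snd x)"] that W_MonGen[of ?B] unfolding Iset_def by auto
  ultimately obtain c where c: "\<exists>x\<in>Iset N. c x \<noteq> 0" "(\<Sum>x\<in>Iset N. sc (c x) (?F x)) = 0"
    using count_dep[of "Iset N" ?S ?F] MonGen_fin by (auto simp: Iset_def)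
  have "(\<Sum>x\<in>Iset N. sc (c x) (?F x)) = Lam ^ (2 * N) * (\<Sum>x\<in>Iset N. sc (c x) (Fsrc f N (fst x) (fst (snd x)) (snd (snd x))))"
    by (simp add: sum_distrib_left sc_def mult.left_commute)
  then have "(\<Sum>x\<in>Iset N. sc (c x) (Fsrc f N (fst x) (fst (snd x)) (snd (snd x)))) = 0"
    using c(2) Lamnz by simp
  then show ?thesis using c(1) by blast
qed

end

lemma sum3: "(\<Sum>x\<in>A \<times> B \<times> C. h x) = (\<Sum>a\<in>A. \<Sum>b\<in>B. \<Sum>c\<in>C. (h (a, b, c) :: 'a::comm_monoid_add))"
  by (simp add: sum.cartesian_product)

lemma extract_coeff:
  fixes f :: "'a::field_char_0 fps fps" and c :: "nat \<times> nat \<times> nat \<Rightarrow> 'a"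
  assumes x: "x \<in> Iset N" and k0N: "k0 \<le> N"
    and below: "\<And>a i k. (a, i, k) \<in> Iset N \<Longrightarrow> k < k0 \<Longrightarrow> c (a, i, k) = 0"
  shows "c x * Fsrc f N (fst x) (fst (snd x)) (snd (snd x)) $ n $ (n + 2 * N - k0) =
    (if snd (snd x) = k0 \<and> fst x \<le> n then
      c (fst x, fst (snd x), k0) * (pochhammer (of_nat (n - fst x + 1)) (fst (snd x)) * (\<Prod>m\<in>{1..k0}. - of_nat m)
        * f $ (n - fst x + fst (snd x)) $ (n - fst x + fst (snd x))) else 0)"
proof -
  obtain a i k where xe: "x = (a, i, k)" by (cases x) auto
  have aik: "a \<le> N" "i \<le> N" "k \<le> N" using x by (auto simp: Iset_def xe)
  show ?thesis
  proof (cases "k < k0")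
    case True then show ?thesis using below[of a i k] x by (simp add: xe)
  next
    case False
    then have kk: "k0 \<le> k" by simp
    show ?thesis
    proof (cases "a \<le> n")
      case False then show ?thesis using aik by (simp add: xe Fsrc_nth)
    next
      case True
      have le: "a + 2 * N - i - k \<le> n + 2 * N - k0" using True kk aik by linarith
      have q': "n + 2 * N - k0 - (a + 2 * N - i - k) = (n - a + i) + (k - k0)" using True kk aik by linarith
      have pr: "(\<Prod>m\<in>{1..k}. (of_nat ((n - a + i) + (k - k0)) - of_nat (n - a + i) - of_nat m :: 'a))
          = (\<Prod>m\<in>{1..k}. of_nat (k - k0) - of_nat m)"
        by (simp add: algebra_simps)
      show ?thesis
      proof (cases "k = k0")
        case True
        then show ?thesis using \<open>a \<le> n\<close> aik le q' pr by (simp add: xe Fsrc_nth)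
      next
        case False
        then have "(\<Prod>m\<in>{1..k}. of_nat (k - k0) - of_nat m :: 'a) = 0"
          using kk by (intro prod_zero) (auto intro!: bexI[of _ "k - k0"])
        then have z: "(\<Prod>m\<in>{1..k}. of_nat (n + 2 * N - k0 - (a + 2 * N - i - k)) - of_nat (n - a + i) - of_nat m :: 'a) = 0"
          unfolding q' pr .
        have ik: "i + k \<le> 2 * N" using aik by simp
        have "Fsrc f N a i k $ n $ (n + 2 * N - k0) = 0"
          by (simp only: Fsrc_nth[OF ik] z mult_zero_right mult_zero_left if_cancel)
        then show ?thesis using False by (simp add: xe)
      qed
    qed
  qed
qed


lemma extract_op:
  fixes f :: "'a::field_char_0 fps fps" and c :: "nat \<times> nat \<times> nat \<Rightarrow> 'a"
  assumes nz: "\<exists>x\<in>Iset N. c x \<noteq> 0"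
    and rel: "(\<Sum>x\<in>Iset N. sc (c x) (Fsrc f N (fst x) (fst (snd x)) (snd (snd x)))) = 0"
  shows "\<exists>P. op_nonzero P \<and> apply_op1 P (diag12 f) = 0 \<and> op_deg1 P \<le> N \<and> op_ord P \<le> N"
proof -
  define u where "u = diag12 f"
  have u: "u $ m = f $ m $ m" for m by (simp add: u_def diag12_def)
  define K where "K = {k. \<exists>a i. (a, i, k) \<in> Iset N \<and> c (a, i, k) \<noteq> 0}"
  have finK: "finite K" unfolding K_def Iset_def by (rule finite_subset[of _ "{..N}"]) auto
  have neK: "K \<noteq> {}" using nz unfolding K_def by auto
  define k0 where "k0 = Min K"
  have k0K: "k0 \<in> K" using finK neK by (simp add: k0_def)
  have k0N: "k0 \<le> N" using k0K unfolding K_def Iset_def by auto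
  have below: "c (a, i, k) = 0" if "(a, i, k) \<in> Iset N" "k < k0" for a i k
  proof (rule ccontr)
    assume "c (a, i, k) \<noteq> 0" then have "k \<in> K" using that(1) unfolding K_def by blast
    then have "k0 \<le> k" using finK by (simp add: k0_def)
    then show False using that(2) by simp
  qed
  define c0 where "c0 a i = c (a, i, k0)" for a i
  define pi0 where "pi0 = (\<Prod>m\<in>{1..k0}. - of_nat m :: 'a)"
  have pi0: "pi0 \<noteq> 0" unfolding pi0_def by (subst prod_zero_iff) auto
  define G where "G n a i = (if a \<le> n then c0 a i * pochhammer (of_nat (n - a + 1)) i * u $ (n - a + i) else 0)" for n a i
  have R: "(\<Sum>a\<le>N. \<Sum>i\<le>N. G n a i) = 0" for n
  proof -
    have "0 = (\<Sum>x\<in>Iset N. sc (c x) (Fsrc f N (fst x) (fst (snd x)) (snd (snd x)))) $ n $ (n + 2 * N - k0)"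
      using rel by simp
    also have "\<dots> = (\<Sum>x\<in>Iset N. c x * Fsrc f N (fst x) (fst (snd x)) (snd (snd x)) $ n $ (n + 2 * N - k0))"
      by (simp add: fps_sum_nth)
    also have "\<dots> = (\<Sum>x\<in>Iset N. if snd (snd x) = k0 \<and> fst x \<le> n then
      c (fst x, fst (snd x), k0) * (pochhammer (of_nat (n - fst x + 1)) (fst (snd x)) * pi0
        * f $ (n - fst x + fst (snd x)) $ (n - fst x + fst (snd x))) else 0)"
    proof (rule sum.cong[OF refl])
      fix x assume "x \<in> Iset N"
      then show "c x * Fsrc f N (fst x) (fst (snd x)) (snd (snd x)) $ n $ (n + 2 * N - k0) = (if snd (snd x) = k0 \<and> fst x \<le> n then
      c (fst x, fst (snd x), k0) * (pochhammer (of_nat (n - fst x + 1)) (fst (snd x)) * pi0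
        * f $ (n - fst x + fst (snd x)) $ (n - fst x + fst (snd x))) else 0)"
        unfolding pi0_def using extract_coeff[of x N k0 c f n] k0N below by blast
    qed
    also have "\<dots> = (\<Sum>x\<in>Iset N. if snd (snd x) = k0 then pi0 * G n (fst x) (fst (snd x)) else 0)"
      by (rule sum.cong[OF refl]) (auto simp: G_def c0_def u)
    also have "\<dots> = (\<Sum>a\<le>N. \<Sum>i\<le>N. \<Sum>k\<le>N. if k = k0 then pi0 * G n a i else 0)"
      unfolding Iset_def sum3 fst_conv snd_conv by simp
    also have "\<dots> = (\<Sum>a\<le>N. \<Sum>i\<le>N. pi0 * G n a i)"
      using k0N by (simp add: sum.delta')
    also have "\<dots> = pi0 * (\<Sum>a\<le>N. \<Sum>i\<le>N. G n a i)" by (simp add: sum_distrib_left)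
    finally show ?thesis using pi0 by simp
  qed
  define I0 where "I0 = {i. i \<le> N \<and> (\<exists>a\<le>N. c0 a i \<noteq> 0)}"
  have finI0: "finite I0" unfolding I0_def by simp
  have neI0: "I0 \<noteq> {}"
  proof -
    obtain a i where "(a, i, k0) \<in> Iset N" "c (a, i, k0) \<noteq> 0" using k0K unfolding K_def by blast
    then have "i \<in> I0" unfolding I0_def c0_def Iset_def by auto
    then show ?thesis by blast
  qed
  define i0 where "i0 = Max I0"
  have i0I: "i0 \<in> I0" using finI0 neI0 by (simp add: i0_def)
  have i0N: "i0 \<le> N" using i0I unfolding I0_def by simp
  have above: "c0 a i = 0" if "i0 < i" "i \<le> N" "a \<le> N" for a i
  proof (rule ccontr)
    assume "c0 a i \<noteq> 0" then have "i \<in> I0" using that unfolding I0_def by blast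
    then have "i \<le> i0" using finI0 by (simp add: i0_def)
    then show False using that by simp
  qed
  define Pc where "Pc i = (\<Sum>a\<le>N. monom (c0 a i) a)" for i
  have cPc: "coeff (Pc i) m = (if m \<le> N then c0 m i else 0)" for i m
    by (simp add: Pc_def coeff_sum coeff_monom)
  define P where "P = map Pc [0..<Suc i0]"
  have lenP: "length P = Suc i0" by (simp add: P_def)
  have Pnth: "j < Suc i0 \<Longrightarrow> P ! j = Pc j" for j by (simp add: P_def del: upt_Suc)
  have nzP: "op_nonzero P"
  proof -
    obtain a where a: "a \<le> N" "c0 a i0 \<noteq> 0" using i0I unfolding I0_def by blast
    have "coeff (Pc i0) a \<noteq> 0" using a by (simp add: cPc)
    then have "Pc i0 \<noteq> 0" by auto
    moreover have "last P = Pc i0" by (simp add: P_def)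
    ultimately show ?thesis by (simp add: op_nonzero_def P_def)
  qed
  have ordP: "op_ord P \<le> N" using i0N by (simp add: op_ord_def lenP)
  have degP: "op_deg1 P \<le> N"
  proof -
    have "degree p \<le> N" if pP: "p \<in> set P" for p
    proof -
      obtain j where "p = Pc j" using pP by (auto simp: P_def simp del: upt_Suc)
      then show ?thesis by (intro degree_le) (simp add: cPc)
    qed
    then show ?thesis unfolding op_deg1_def by (subst Max_le_iff) auto
  qed
  have appP: "apply_op1 P u = 0"
  proof (rule fps_ext)
    fix n
    have "apply_op1 P u $ n = (\<Sum>j<Suc i0. \<Sum>m=0..n. coeff (Pc j) m * ((fps_deriv ^^ j) u) $ (n - m))"
      unfolding apply_op1_def lenP by (simp add: fps_sum_nth fps_mult_nth Pnth)
    also have "\<dots> = (\<Sum>j<Suc i0. \<Sum>a\<le>N. G n a j)"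
    proof (rule sum.cong[OF refl])
      fix j
      have "(\<Sum>m=0..n. coeff (Pc j) m * ((fps_deriv ^^ j) u) $ (n - m))
          = (\<Sum>m=0..n. if m \<le> N then c0 m j * pochhammer (of_nat (n - m + 1)) j * u $ (n - m + j) else 0)"
        by (rule sum.cong[OF refl]) (simp add: cPc derivit_nth)
      also have "\<dots> = (\<Sum>m\<in>{m\<in>{0..n}. m \<le> N}. c0 m j * pochhammer (of_nat (n - m + 1)) j * u $ (n - m + j))"
        by (rule sum.inter_filter[symmetric]) simp
      also have "{m\<in>{0..n}. m \<le> N} = {a\<in>{..N}. a \<le> n}" by auto
      also have "(\<Sum>m\<in>{a\<in>{..N}. a \<le> n}. c0 m j * pochhammer (of_nat (n - m + 1)) j * u $ (n - m + j)) = (\<Sum>a\<le>N. G n a j)"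
        unfolding G_def by (rule sum.inter_filter) simp
      finally show "(\<Sum>m=0..n. coeff (Pc j) m * ((fps_deriv ^^ j) u) $ (n - m)) = (\<Sum>a\<le>N. G n a j)" .
    qed
    also have "\<dots> = (\<Sum>j\<le>N. \<Sum>a\<le>N. G n a j)"
    proof (rule sum.mono_neutral_left)
      show "\<forall>j\<in>{..N} - {..<Suc i0}. (\<Sum>a\<le>N. G n a j) = 0"
      proof
        fix j assume "j \<in> {..N} - {..<Suc i0}"
        then have "i0 < j" "j \<le> N" by auto
        then show "(\<Sum>a\<le>N. G n a j) = 0" using above by (intro sum.neutral) (auto simp: G_def)
      qed
    qed (use i0N in auto)
    also have "\<dots> = (\<Sum>a\<le>N. \<Sum>j\<le>N. G n a j)" by (rule sum.swap)
    also have "\<dots> = 0" by (rule R)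
    finally show "apply_op1 P u $ n = 0 $ n" by simp
  qed
  show ?thesis using nzP appP degP ordP unfolding u_def by blast
qed


context dset begin

lemma exists_P:
  assumes d1: "1 \<le> d" and r1r: "r1 \<le> r" and r2r: "r2 \<le> r"
  shows "\<exists>P. op_nonzero P \<and> apply_op1 P (diag12 f) = 0 \<and> op_deg1 P \<le> 121 * d^2 * r^2 \<and> op_ord P \<le> 121 * d^2 * r^2"
proof -
  define N where "N = 121 * d^2 * r^2"
  have r1: "1 \<le> r" using r1pos r1r by simp
  have rd1: "1 \<le> r * d" using r1 d1 by (simp add: one_le_mult_iff)
  have NrD: "r * d \<le> N"
  proof -
    have "r * d \<le> (r * d) * (r * d)" using rd1 by simp
    also have "\<dots> \<le> 121 * ((r * d) * (r * d))" by simp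
    finally show ?thesis by (simp add: N_def power2_eq_square algebra_simps)
  qed
  define Bm1 where "Bm1 = 4 * N * d + 4 * N + (r1 + r2) * d + 1"
  have "(r1 + r2) * d \<le> 2 * N"
  proof -
    have "(r1 + r2) * d \<le> (2 * r) * d" using r1r r2r by (intro mult_le_mono1) simp
    also have "\<dots> = 2 * (r * d)" by simp
    finally show ?thesis using NrD by linarith
  qed
  moreover have "N \<le> N * d" "4 * N \<le> 4 * N * d" using d1 by simp_all
  moreover have "1 \<le> N" using rd1 NrD by linarith
  ultimately have B: "Bm1 \<le> 11 * N * d" unfolding Bm1_def by linarith
  have "Bm1 * (Bm1 * (r1 * r2)) \<le> (11 * N * d) * ((11 * N * d) * (r * r))"
    using B r1r r2r by (intro mult_le_mono mult_le_mono2) simp_all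
  also have "\<dots> = N * (N * N)" by (simp add: N_def power2_eq_square algebra_simps)
  also have "\<dots> < (N + 1) * ((N + 1) * (N + 1))" by (intro mult_strict_mono) auto
  finally have "(4 * N * d + 4 * N + (r1 + r2) * d + 1) * ((4 * N * d + 4 * N + (r1 + r2) * d + 1) * (r1 * r2)) < (N + 1) * ((N + 1) * (N + 1))"
    unfolding Bm1_def .
  from main_rel[OF this] obtain c where "\<exists>x\<in>Iset N. c x \<noteq> 0"
    "(\<Sum>x\<in>Iset N. sc (c x) (Fsrc f N (fst x) (fst (snd x)) (snd (snd x)))) = 0" by blast
  from extract_op[OF this] show ?thesis unfolding N_def .
qed

end

lemma fps_deriv_ofnat: "fps_deriv (of_nat k * (a :: 'a::comm_ring_1 fps)) = of_nat k * fps_deriv a"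
  by (simp add: fps_of_nat[symmetric])

lemma leibniz1: "(fps_deriv ^^ n) (a * b :: 'a::comm_ring_1 fps) = (\<Sum>s\<le>n. of_nat (n choose s) * ((fps_deriv ^^ s) a * (fps_deriv ^^ (n - s)) b))"
proof (induction n)
  case 0 then show ?case by simp
next
  case (Suc n)
  let ?D = "fps_deriv :: 'a fps \<Rightarrow> 'a fps"
  let ?T = "\<lambda>s. (?D ^^ s) a * (?D ^^ (Suc n - s)) b"
  have "(?D ^^ Suc n) (a * b) = (\<Sum>s\<le>n. of_nat (n choose s) * ?D ((?D ^^ s) a * (?D ^^ (n - s)) b))"
    by (simp add: Suc fps_deriv_sum fps_deriv_ofnat)
  also have "\<dots> = (\<Sum>s\<le>n. of_nat (n choose s) * ?T (Suc s) + of_nat (n choose s) * ?T s)"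
  proof (rule sum.cong[OF refl])
    fix s assume "s \<in> {..n}"
    then have "?D ((?D ^^ (n - s)) b) = (?D ^^ (Suc n - s)) b" by (simp add: Suc_diff_le)
    then show "of_nat (n choose s) * ?D ((?D ^^ s) a * (?D ^^ (n - s)) b) = of_nat (n choose s) * ?T (Suc s) + of_nat (n choose s) * ?T s"
      by (simp add: fps_deriv_mult distrib_left)
  qed
  also have "\<dots> = (\<Sum>s\<le>n. of_nat (n choose s) * ?T (Suc s)) + (\<Sum>s\<le>n. of_nat (n choose s) * ?T s)"
    by (rule sum.distrib)
  also have "(\<Sum>s\<le>n. of_nat (n choose s) * ?T s) = (\<Sum>s\<le>Suc n. of_nat (n choose s) * ?T s)"
    by (simp add: binomial_eq_0)
  also have "(\<Sum>s\<le>Suc n. of_nat (n choose s) * ?T s) = of_nat (n choose 0) * ?T 0 + (\<Sum>s\<le>n. of_nat (n choose Suc s) * ?T (Suc s))"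
    by (rule sum.atMost_Suc_shift)
  also have "(\<Sum>s\<le>n. of_nat (n choose s) * ?T (Suc s)) + (of_nat (n choose 0) * ?T 0 + (\<Sum>s\<le>n. of_nat (n choose Suc s) * ?T (Suc s)))
     = of_nat (Suc n choose 0) * ?T 0 + (\<Sum>s\<le>n. of_nat (Suc n choose Suc s) * ?T (Suc s))"
  proof -
    have "(\<Sum>s\<le>n. of_nat (Suc n choose Suc s) * ?T (Suc s)) = (\<Sum>s\<le>n. of_nat (n choose s) * ?T (Suc s)) + (\<Sum>s\<le>n. of_nat (n choose Suc s) * ?T (Suc s))"
      by (simp only: binomial_Suc_Suc of_nat_add distrib_right sum.distrib)
    moreover have "(Suc n choose 0) = (n choose 0)" by simp
    ultimately show ?thesis by (simp only: add.assoc add.left_commute)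
  qed
  also have "\<dots> = (\<Sum>s\<le>Suc n. of_nat (Suc n choose s) * ?T s)"
    by (rule sum.atMost_Suc_shift[symmetric])
  finally show ?case by simp
qed

definition ispoly :: "'a::field fps \<Rightarrow> bool" where "ispoly x \<longleftrightarrow> (\<exists>p. x = fps_of_poly p)"

lemma ispoly_deriv: "ispoly x \<Longrightarrow> ispoly ((fps_deriv ^^ s) x)"
  by (induction s) (auto simp: ispoly_def fps_of_poly_pderiv[symmetric])
lemma ispoly_mult: "ispoly x \<Longrightarrow> ispoly y \<Longrightarrow> ispoly (x * y)"
  by (auto simp: ispoly_def fps_of_poly_mult[symmetric])
lemma fps_of_poly_ofnat: "fps_of_poly (of_nat k) = (of_nat k :: 'a::comm_ring_1 fps)"
  by (induction k) (simp_all add: fps_of_poly_add)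
lemma ispoly_ofnat: "ispoly (of_nat k)"
  unfolding ispoly_def by (rule exI[of _ "of_nat k"]) (simp add: fps_of_poly_ofnat)

lemma ratfun1_I: "q \<noteq> 0 \<Longrightarrow> Fract (fps_of_poly p) (fps_of_poly q) \<in> ratfun1"
  unfolding ratfun1_def by blast
lemma ratfun1_poly: "ispoly x \<Longrightarrow> Fract x 1 \<in> ratfun1"
  unfolding ispoly_def using ratfun1_I[of 1] by auto
lemma ratfun1_inv: "p \<noteq> 0 \<Longrightarrow> Fract 1 (fps_of_poly p) \<in> ratfun1"
  using ratfun1_I[of p 1] by simp
lemma fps_of_poly_nz: "p \<noteq> 0 \<Longrightarrow> fps_of_poly p \<noteq> 0"
  by (metis fps_of_poly_0 fps_of_poly_eq_iff)
lemma ratfun1_add: "x \<in> ratfun1 \<Longrightarrow> y \<in> ratfun1 \<Longrightarrow> x + y \<in> ratfun1"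
  unfolding ratfun1_def
proof (clarify)
  fix p q p' q' :: "'a poly" assume "q \<noteq> 0" "q' \<noteq> 0"
  then show "\<exists>pa qa. Fract (fps_of_poly p) (fps_of_poly q) + Fract (fps_of_poly p') (fps_of_poly q') = Fract (fps_of_poly pa) (fps_of_poly qa) \<and> qa \<noteq> 0"
    by (intro exI[of _ "p * q' + p' * q"] exI[of _ "q * q'"])
       (simp add: fps_of_poly_nz fps_of_poly_mult fps_of_poly_add)
qed
lemma ratfun1_mult: "x \<in> ratfun1 \<Longrightarrow> y \<in> ratfun1 \<Longrightarrow> x * y \<in> ratfun1"
  unfolding ratfun1_def
proof (clarify)
  fix p q p' q' :: "'a poly" assume "q \<noteq> 0" "q' \<noteq> 0"
  then show "\<exists>pa qa. Fract (fps_of_poly p) (fps_of_poly q) * Fract (fps_of_poly p') (fps_of_poly q') = Fract (fps_of_poly pa) (fps_of_poly qa) \<and> qa \<noteq> 0"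
    by (intro exI[of _ "p * p'"] exI[of _ "q * q'"]) (simp add: fps_of_poly_mult)
qed
lemma ratfun1_neg: assumes "x \<in> ratfun1" shows "- x \<in> ratfun1"
proof -
  obtain p q where "q \<noteq> 0" "x = Fract (fps_of_poly p) (fps_of_poly q)" using assms unfolding ratfun1_def by blast
  then show ?thesis using ratfun1_I[of q "- p"] by (simp add: fps_of_poly_uminus)
qed
lemma ratfun1_0: "0 \<in> ratfun1"
  using ratfun1_I[of 1 0] by (simp add: Zero_fract_def)
lemma ratfun1_1: "1 \<in> ratfun1"
  using ratfun1_I[of 1 1] by (simp add: One_fract_def)

lemma Fract_add1: "Fract (x + y) 1 = Fract x 1 + Fract (y :: 'a::idom) 1" by simp
lemma Fract_mult1: "Fract (x * y) 1 = Fract x 1 * Fract (y :: 'a::idom) 1" by simp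
lemma Fract_neg1: "Fract (- x) 1 = - Fract (x :: 'a::idom) 1" by simp
lemma Fract_diff1: "Fract (x - y) 1 = Fract x 1 - Fract (y :: 'a::idom) 1" by simp
lemma Fract_sum1: "Fract (sum g A) 1 = (\<Sum>i\<in>A. Fract (g i :: 'a::idom) 1)"
  by (induction A rule: infinite_finite_induct) (simp_all add: Zero_fract_def Fract_add1 del: add_fract)


lemma derivit_zero: "(fps_deriv ^^ e) (0::'a::comm_ring_1 fps) = 0"
  by (induction e) simp_all
lemma derivit_sum: "(fps_deriv ^^ e) (sum h A) = (\<Sum>i\<in>A. (fps_deriv ^^ e) (h i :: 'a::comm_ring_1 fps))"
  by (induction e) (simp_all add: fps_deriv_sum)

lemma funpow2: "(f ^^ m) ((f ^^ n) x) = (f ^^ (m + n)) x"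
  by (simp add: funpow_add)

lemma dfinite1_of_op:
  fixes g :: "'a::field fps"
  assumes nz: "op_nonzero P" and ann: "apply_op1 P g = 0"
  shows "dfinite1 g"
proof -
  let ?D = "fps_deriv :: 'a fps \<Rightarrow> 'a fps"
  define r where "r = length P - 1"
  have len: "length P = Suc r" using nz by (simp add: op_nonzero_def r_def)
  define p where "p j = fps_of_poly (P ! j)" for j
  have ann': "(\<Sum>j\<le>r. p j * (?D ^^ j) g) = 0"
    using ann by (simp add: apply_op1_def len lessThan_Suc_atMost p_def)
  have plast: "P ! r = last P" using nz by (simp add: last_conv_nth op_nonzero_def r_def)
  have lastnz: "last P \<noteq> 0" using nz by (simp add: op_nonzero_def)
  have pp: "ispoly (p j)" for j by (simp add: ispoly_def p_def)
  define S where "S = {x. \<exists>c. (\<forall>i. c i \<in> ratfun1) \<and> x = (\<Sum>i<r. c i * Fract ((?D ^^ i) g) 1)}"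
  have S0: "0 \<in> S" unfolding S_def using ratfun1_0 by (intro CollectI exI[of _ "\<lambda>_. 0"]) auto
  have Sadd: "x + y \<in> S" if xyS: "x \<in> S" "y \<in> S" for x y
  proof -
    obtain c c' where "\<forall>i. c i \<in> ratfun1" "x = (\<Sum>i<r. c i * Fract ((?D ^^ i) g) 1)"
      "\<forall>i. c' i \<in> ratfun1" "y = (\<Sum>i<r. c' i * Fract ((?D ^^ i) g) 1)" using xyS unfolding S_def by blast
    then show ?thesis unfolding S_def
      by (intro CollectI exI[of _ "\<lambda>i. c i + c' i"]) (auto simp: ratfun1_add sum.distrib distrib_right)
  qed
  have Sneg: "- x \<in> S" if xS: "x \<in> S" for x
  proof -
    obtain c where "\<forall>i. c i \<in> ratfun1" "x = (\<Sum>i<r. c i * Fract ((?D ^^ i) g) 1)" using xS unfolding S_def by blast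
    then show ?thesis unfolding S_def
      by (intro CollectI exI[of _ "\<lambda>i. - c i"]) (auto simp: ratfun1_neg sum_negf)
  qed
  have Sscale: "\<rho> * x \<in> S" if rxS: "\<rho> \<in> ratfun1" "x \<in> S" for \<rho> x
  proof -
    obtain c where "\<forall>i. c i \<in> ratfun1" "x = (\<Sum>i<r. c i * Fract ((?D ^^ i) g) 1)" using rxS(2) unfolding S_def by blast
    then show ?thesis unfolding S_def using rxS(1)
      by (intro CollectI exI[of _ "\<lambda>i. \<rho> * c i"]) (auto simp: ratfun1_mult sum_distrib_left mult.assoc)
  qed
  have Ssum: "finite A \<Longrightarrow> (\<And>i. i \<in> A \<Longrightarrow> h i \<in> S) \<Longrightarrow> sum h A \<in> S" for A and h :: "nat \<Rightarrow> _"
    by (induction A rule: finite_induct) (auto intro: S0 Sadd)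
  have Ssum2: "finite A \<Longrightarrow> (\<And>i. i \<in> A \<Longrightarrow> h i \<in> S) \<Longrightarrow> sum h A \<in> S" for A and h :: "nat \<times> nat \<Rightarrow> _"
    by (induction A rule: finite_induct) (auto intro: S0 Sadd)
  have all: "Fract ((?D ^^ k) g) 1 \<in> S" for k
  proof (induction k rule: less_induct)
    case (less k)
    show ?case
    proof (cases "k < r")
      case True
      then show ?thesis unfolding S_def using ratfun1_0 ratfun1_1
        by (intro CollectI exI[of _ "\<lambda>i. if i = k then 1 else 0"]) (auto simp: if_distrib[of "\<lambda>x. x * _"] cong: if_cong)
    next
      case False
      define e where "e = k - r"
      have ke: "k = e + r" using False by (simp add: e_def)
      define T where "T j s = of_nat (e choose s) * ((?D ^^ s) (p j) * (?D ^^ (e - s + j)) g)" for j s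
      have "0 = (?D ^^ e) (\<Sum>j\<le>r. p j * (?D ^^ j) g)" using ann' by (simp add: derivit_zero)
      also have "\<dots> = (\<Sum>j\<le>r. \<Sum>s\<le>e. T j s)"
        by (simp add: derivit_sum leibniz1 T_def funpow2)
      also have "\<dots> = (\<Sum>j<r. \<Sum>s\<le>e. T j s) + (T r 0 + (\<Sum>s<e. T r (Suc s)))"
      proof -
        have "{..r} = insert r {..<r}" by auto
        then have "(\<Sum>j\<le>r. \<Sum>s\<le>e. T j s) = (\<Sum>j<r. \<Sum>s\<le>e. T j s) + (\<Sum>s\<le>e. T r s)" by simp
        also have "(\<Sum>s\<le>e. T r s) = T r 0 + (\<Sum>s<e. T r (Suc s))" by (rule sum.atMost_shift)
        finally show ?thesis .
      qed
      finally have eq0: "(\<Sum>j<r. \<Sum>s\<le>e. T j s) + (T r 0 + (\<Sum>s<e. T r (Suc s))) = 0" by simp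
      have Tr0: "T r 0 = p r * (?D ^^ k) g" by (simp add: T_def ke add.commute)
      have FT: "Fract (T j s) 1 \<in> S" if "e - s + j < k" for j s
      proof -
        have "Fract (T j s) 1 = Fract (of_nat (e choose s) * (?D ^^ s) (p j)) 1 * Fract ((?D ^^ (e - s + j)) g) 1"
          by (simp add: T_def mult.assoc)
        moreover have "Fract (of_nat (e choose s) * (?D ^^ s) (p j)) 1 \<in> ratfun1"
          by (intro ratfun1_poly ispoly_mult ispoly_ofnat ispoly_deriv pp)
        ultimately show ?thesis using less[OF that] Sscale by metis
      qed
      have "Fract (p r * (?D ^^ k) g) 1 = - (\<Sum>j<r. \<Sum>s\<le>e. Fract (T j s) 1) - (\<Sum>s<e. Fract (T r (Suc s)) 1)"
      proof -
        have "p r * (?D ^^ k) g = - (\<Sum>j<r. \<Sum>s\<le>e. T j s) - (\<Sum>s<e. T r (Suc s))"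
        proof -
          have "T r 0 = - ((\<Sum>j<r. \<Sum>s\<le>e. T j s) + (\<Sum>s<e. T r (Suc s)))"
            using eq0 by (simp add: add_eq_0_iff ac_simps)
          then show ?thesis using Tr0 by simp
        qed
        then show ?thesis by (simp only: Fract_diff1 Fract_neg1 Fract_sum1)
      qed
      also have "\<dots> \<in> S"
      proof -
        have a: "(\<Sum>j<r. \<Sum>s\<le>e. Fract (T j s) 1) \<in> S"
          using ke by (intro Ssum FT) auto
        have b: "(\<Sum>s<e. Fract (T r (Suc s)) 1) \<in> S"
          using ke by (intro Ssum FT) auto
        show ?thesis using Sadd[OF Sneg[OF a] Sneg[OF b]] by simp
      qed
      finally have X: "Fract (p r * (?D ^^ k) g) 1 \<in> S" .
      have "p r \<noteq> 0" using lastnz plast by (simp add: p_def fps_of_poly_nz)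
      then have "Fract ((?D ^^ k) g) 1 = Fract 1 (p r) * Fract (p r * (?D ^^ k) g) 1"
        using mult_fract_cancel[of "p r" "(?D ^^ k) g" 1] by simp
      moreover have "Fract 1 (p r) \<in> ratfun1" using lastnz plast by (simp add: p_def ratfun1_inv)
      ultimately show ?thesis using Sscale X by metis
    qed
  qed
  show ?thesis unfolding dfinite1_def using all unfolding S_def by blast
qed

lemma diag_P:
  fixes g :: "'a::field_char_0 fps fps"
  assumes "op_nonzero M1" "op_nonzero M2" "apply_op_x1 M1 g = 0" "apply_op_x2 M2 g = 0"
    and "op_deg2 M1 \<le> d" "op_deg2 M2 \<le> d" "1 \<le> d" "op_ord M1 \<le> r" "op_ord M2 \<le> r"
  shows "\<exists>P. op_nonzero P \<and> apply_op1 P (diag12 g) = 0 \<and> op_deg1 P \<le> 121 * d^2 * r^2 \<and> op_ord P \<le> 121 * d^2 * r^2"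
proof (cases "g = 0")
  case True
  have "diag12 g = 0" using True by (intro fps_ext) (simp add: diag12_def)
  then have "op_nonzero [1::'a poly] \<and> apply_op1 [1] (diag12 g) = 0 \<and> op_deg1 [1::'a poly] \<le> 121 * d^2 * r^2 \<and> op_ord [1::'a poly] \<le> 121 * d^2 * r^2"
    by (simp add: op_nonzero_def apply_op1_def op_deg1_def op_ord_def)
  then show ?thesis by blast
next
  case False
  interpret dset g M1 M2 d using assms False by unfold_locales auto
  show ?thesis using exists_P[OF assms(7)] assms(8,9) by (simp add: r1_def r2_def op_ord_def)
qed

lemma bound_lemma:
  fixes g :: "'a::field_char_0 fps fps"
  assumes h: "hyp g M1 M2" and d1: "1 \<le> max (op_deg2 M1) (op_deg2 M2)" and r1: "1 \<le> max (op_ord M1) (op_ord M2)"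
  shows "\<exists>P. op_nonzero P \<and> apply_op1 P (diag12 g) = 0 \<and>
           op_deg1 P \<le> 121 * max (op_deg2 M1) (op_deg2 M2) ^ 3 * max (op_ord M1) (op_ord M2) ^ 4 \<and>
           op_ord P \<le> 121 * max (op_deg2 M1) (op_deg2 M2) ^ 2 * max (op_ord M1) (op_ord M2) ^ 2"
proof -
  define d where "d = max (op_deg2 M1) (op_deg2 M2)"
  define r where "r = max (op_ord M1) (op_ord M2)"
  have hh: "op_nonzero M1" "op_nonzero M2" "apply_op_x1 M1 g = 0" "apply_op_x2 M2 g = 0"
    using h unfolding hyp_def by auto
  have dd: "op_deg2 M1 \<le> d" "op_deg2 M2 \<le> d" "1 \<le> d" "op_ord M1 \<le> r" "op_ord M2 \<le> r"
    using d1 unfolding d_def r_def by auto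
  obtain P where P: "op_nonzero P" "apply_op1 P (diag12 g) = 0" "op_deg1 P \<le> 121 * d^2 * r^2" "op_ord P \<le> 121 * d^2 * r^2"
    using diag_P[OF hh dd] by blast
  have "d^2 \<le> d^3" using d1 unfolding d_def[symmetric] by (intro power_increasing) auto
  moreover have "r^2 \<le> r^4" using r1 unfolding r_def[symmetric] by (intro power_increasing) auto
  ultimately have "121 * d^2 * r^2 \<le> 121 * d^3 * r^4" by (intro mult_le_mono) auto
  then show "\<exists>P. op_nonzero P \<and> apply_op1 P (diag12 g) = 0 \<and>
         op_deg1 P \<le> 121 * max (op_deg2 M1) (op_deg2 M2) ^ 3 * max (op_ord M1) (op_ord M2) ^ 4 \<and>
         op_ord P \<le> 121 * max (op_deg2 M1) (op_deg2 M2) ^ 2 * max (op_ord M1) (op_ord M2) ^ 2"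
    using P unfolding d_def r_def by (intro exI[of _ P]) auto
qed

theorem corollary3p18:
  fixes f :: "'a::field_char_0 fps fps" and L1 L2 :: "'a poly poly list"
  assumes "dfinite2 f"
    and "op_nonzero L1" and "apply_op_x1 L1 f = 0"
    and "op_nonzero L2" and "apply_op_x2 L2 f = 0"
  shows "dfinite1 (diag12 f) \<and>
    (\<exists>C N::nat. \<forall>(g::'a fps fps) M1 M2. hyp g M1 M2 \<longrightarrow>
        max (op_deg2 M1) (op_deg2 M2) \<ge> N \<longrightarrow> max (op_ord M1) (op_ord M2) \<ge> N \<longrightarrow>
        (\<exists>P. op_nonzero P \<and> apply_op1 P (diag12 g) = 0 \<and>
           op_deg1 P \<le> C * max (op_deg2 M1) (op_deg2 M2) ^ 3 * max (op_ord M1) (op_ord M2) ^ 4 \<and>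
           op_ord P \<le> C * max (op_deg2 M1) (op_deg2 M2) ^ 2 * max (op_ord M1) (op_ord M2) ^ 2))"
proof
  have "\<exists>P. op_nonzero P \<and> apply_op1 P (diag12 f) = 0"
    using diag_P[OF assms(2,4,3,5), of "max (max (op_deg2 L1) (op_deg2 L2)) 1" "max (op_ord L1) (op_ord L2)"]
    by fastforce
  then obtain P where "op_nonzero P" "apply_op1 P (diag12 f) = 0" by blast
  then show "dfinite1 (diag12 f)" by (rule dfinite1_of_op)
next
  show "\<exists>C N::nat. \<forall>(g::'a fps fps) M1 M2. hyp g M1 M2 \<longrightarrow>
        max (op_deg2 M1) (op_deg2 M2) \<ge> N \<longrightarrow> max (op_ord M1) (op_ord M2) \<ge> N \<longrightarrow>
        (\<exists>P. op_nonzero P \<and> apply_op1 P (diag12 g) = 0 \<and>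
           op_deg1 P \<le> C * max (op_deg2 M1) (op_deg2 M2) ^ 3 * max (op_ord M1) (op_ord M2) ^ 4 \<and>
           op_ord P \<le> C * max (op_deg2 M1) (op_deg2 M2) ^ 2 * max (op_ord M1) (op_ord M2) ^ 2)"
  by (intro exI[of _ 121] exI[of _ 1] allI impI) (rule bound_lemma)
qed

end
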